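(* Let $M$ be a highest weight $\mathfrak{gl}_N$-module and let $\boldsymbol\omega=(\omega_k(M))_{k\in\mathbb N}$. Then the assignment $A\mapsto M\otimes V^{\otimes A}$ on objects, together with $s_i,e_i,\hat s_i,\hat e_i,y_i\mapsto$ the operators defined below, defines a functor from $\underline{\mathrm{VB}}_{r,t}(\boldsymbol\omega)$ to the category of $\mathfrak{gl}_N$-modules (all operators are $\mathfrak{gl}_N$-homomorphisms). In particular, for every $A\in\mathrm{Seq}_{r,t}$ the algebra $\mathrm{VB}_A(\boldsymbol\omega)$ acts on $M\otimes V^{\otimes A}$ by $\mathfrak{gl}_N$-module endomorphisms.
   Context: Let $r,t\in\mathbb N$. An $(r,t)$-sequence is a sequence $A=(a_1,\dots,a_{r+t})$ that is a permutation of $(1,\dots,1,-1,\dots,-1)$ ($r$ entries $1$, $t$ entries $-1$); $\mathrm{Seq}_{r,t}$ is the set of these, and the simple transpositions $\mathsf s_j=(j,j+1)$ of $S_{r+t}$ act on it by permuting entries. Fix complex numbers $\boldsymbol\omega=(\omega_k)_{k\in\mathbb N}$. The degenerate affine walled Brauer category $\underline{\mathrm{VB}}_{r,t}(\boldsymbol\omega)$ is the $\mathbb C$-linear category with object set $\mathrm{Seq}_{r,t}$ whose morphisms are generated by: endomorphisms $s_i^{(A)}$ of $A$ for $1\le i\le r+t-1$ with $a_i=a_{i+1}$; endomorphisms $e_i^{(A)}$ of $A$ for $1\le i\le r+t-1$ with $a_i\neq a_{i+1}$; endomorphisms $y_i^{(A)}$ of $A$ for $1\le i\le r+t$; and morphisms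 $\hat s_j^{(A)},\hat e_j^{(A)}:A\to\mathsf s_jA$ whenever $\mathsf s_jA\ne A$. Superscripts are usually omitted; composition $fg$ means $g$ first. A symbol $\dot s_i$ stands for $s_i$ or $\hat s_i$ and $\dot e_i$ for $e_i$ or $\hat e_i$; each relation is imposed for all objects and all choices of dotted symbols (possibly different on the two sides) for which both sides are defined morphisms with the same source and target. Relations: (1) $\dot s_i\dot s_i=1$; (2) $\dot s_i\dot s_j=\dot s_j\dot s_i$ for $|i-j|>1$, $\dot s_i\dot s_{i+1}\dot s_i=\dot s_{i+1}\dot s_i\dot s_{i+1}$, $\dot s_iy_j=y_j\dot s_i$ for $j\ne i,i+1$; (3) $(e_i^{(A)})^2=\omega_0e_i^{(A)}$; (4) $e_1^{(A)}y_1^ke_1^{(A)}=\omega_ke_1^{(A)}$ for all $k\in\mathbb N$ when $a_1=1,a_2=-1$; (5) $\dot s_i\dot e_j=\dot e_j\dot s_i$ and $\dot e_i\dot e_j=\dot e_j\dot e_i$ for $|i-j|>1$, $\dot e_iy_j=y_j\dot e_i$ for $j\neq i,i+1$, $y_iy_j=y_jy_i$; (6) $\hat s_i\dot e_i=\dot e_i=\dot e_i\hat s_i$, $\dot s_i\dot e_{i+1}\dot e_i=\dot s_{i+1}\dot e_i$, $\dot e_i\dot e_{i+1}\dot s_i=\dot e_i\dot s_{i+1}$, $\dot e_{i+1}\dot e_i\dot s_{i+1}=\dot e_{i+1}\dot s_i$, $\dot s_{i+1}\dot e_i\dot e_{i+1}=\dot s_i\dot e_{i+1}$, $\dot e_{i+1}\dot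 e_i\dot e_{i+1}=\dot e_{i+1}$, $\dot e_i\dot e_{i+1}\dot e_i=\dot e_i$; (7) $s_iy_i-y_{i+1}s_i=-1$, $s_iy_{i+1}-y_is_i=1$, $\hat s_iy_i-y_{i+1}\hat s_i=\hat e_i$, $\hat s_iy_{i+1}-y_i\hat s_i=-\hat e_i$; (8) $\dot e_i(y_i+y_{i+1})=0=(y_i+y_{i+1})\dot e_i$. $\mathrm{VB}_A(\boldsymbol\omega):=\operatorname{End}(A)$. $\mathfrak{gl}_N$ data: $I=\{1,\dots,N\}$, $E_{ij}$ matrix units, $\mathfrak n^+$ strictly upper triangular matrices; a highest weight module is one generated by an $\mathfrak h$-weight vector (for the diagonal Cartan $\mathfrak h$) annihilated by $\mathfrak n^+$. $V=\mathbb C^N$ with basis $v_i$, $E_{ij}v_k=\delta_{jk}v_i$; $V^*$ with dual basis $v_i^*$, $E_{ij}v_k^*=-\delta_{ik}v_j^*$. $V^{\otimes A}=V^{a_1}\otimes\cdots\otimes V^{a_{r+t}}$, $V^1=V$, $V^{-1}=V^*$; factors of $M\otimes V^{\otimes A}$ numbered $0,\dots,r+t$ with $M$ at $0$. For $W\in\{V,V^*\}$ write $(w_p,w_p^* )=(v_p,v_p^* )$ if $W=V$ and $(v_p^*,v_p)$ if $W=V^*$. Operators: $s_i$ (if $a_i=a_{i+1}$) and $\hat s_i:M\otimes V^{\otimes A}\to M\otimes V^{\otimes\mathsf s_iA}$ (if $a_i\ne a_{i+1}$) act by the flip $x\otimes y\mapsto y\otimes x$ on factors $i,i+1$; for $a_i\ne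 a_{i+1}$ and $W=V^{a_i}$, $e_i$ acts on factors $i,i+1$ by $w_p\otimes w_q^*\mapsto\delta_{pq}\sum_{k\in I}w_k\otimes w_k^*$ and $\hat e_i:M\otimes V^{\otimes A}\to M\otimes V^{\otimes\mathsf s_iA}$ by $w_p\otimes w_q^*\mapsto\delta_{pq}\sum_{k\in I}w_k^*\otimes w_k$; all other factors are fixed. With $\Omega=\sum_{i,j}E_{ij}\otimes E_{ji}$ and $\Omega_{kl}$ its action on factors $k<l$, $y_i=\sum_{0\le k<i}\Omega_{ki}+\frac N2$. For a highest weight module $M$, $\omega_k(M)$ is the scalar by which the composite $M\to M\otimes V\otimes V^*\xrightarrow{y_1^k}M\otimes V\otimes V^*\to M$ acts, the first map being $m\mapsto\sum_jm\otimes v_j\otimes v_j^*$ and the last $m\otimes v_i\otimes v_j^*\mapsto\delta_{ij}m$ (this composite is a scalar multiple of the identity). *)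

theory Defs
  imports Complex_Main
begin

(* Conventions.
   * Basis indices of V = C^N are 0..N-1 (the paper uses 1..N); E_ij for i,j<N.
   * Positions (factor numbers) in sequences and tensor factors are 1-based as
     in the paper: position k of A :: int list is A!(k-1).
   * A gl_N-module M is the type 'm with complex scalar multiplication smul and
     action act i j = action of the matrix unit E_ij.
   * M (x) V^{(x)A} (n = length A factors) is modelled by coordinates: a function
     x :: nat list => 'm vanishing outside the index lists ps of length n with
     entries < N; x stands for  sum_ps  x(ps) (x) w_{ps!0} (x) ... (x) w_{ps!(n-1)}
     where w_p = v_p at a position with a_k = 1 and w_p = v_p^* where a_k = -1.   *)

definition gl_module :: "nat \<Rightarrow> (complex \<Rightarrow> 'm::ab_group_add \<Rightarrow> 'm) \<Rightarrow> (nat \<Rightarrow> nat \<Rightarrow> 'm \<Rightarrow> 'm) \<Rightarrow> bool" where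
  "gl_module N smul act \<longleftrightarrow> module smul \<and>
     (\<forall>i<N. \<forall>j<N. (\<forall>x y. act i j (x + y) = act i j x + act i j y) \<and>
                    (\<forall>c x. act i j (smul c x) = smul c (act i j x))) \<and>
     (\<forall>i<N. \<forall>j<N. \<forall>k<N. \<forall>l<N. \<forall>x.
        act i j (act k l x) - act k l (act i j x)
          = (if j = k then act i l x else 0) - (if l = i then act k j x else 0))"

definition highest_weight :: "nat \<Rightarrow> (complex \<Rightarrow> 'm::ab_group_add \<Rightarrow> 'm) \<Rightarrow> (nat \<Rightarrow> nat \<Rightarrow> 'm \<Rightarrow> 'm) \<Rightarrow> bool" where
  "highest_weight N smul act \<longleftrightarrow>
     (\<exists>v0 (lam :: nat \<Rightarrow> complex). v0 \<noteq> 0 \<and>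
        (\<forall>i<N. act i i v0 = smul (lam i) v0) \<and>
        (\<forall>i<N. \<forall>j<N. i < j \<longrightarrow> act i j v0 = 0) \<and>
        (\<forall>S. module.subspace smul S \<and> v0 \<in> S \<and>
              (\<forall>i<N. \<forall>j<N. \<forall>x\<in>S. act i j x \<in> S) \<longrightarrow> S = UNIV))"

definition Seq :: "nat \<Rightarrow> nat \<Rightarrow> int list set" where
  "Seq r t = {A. set A \<subseteq> {1, -1} \<and> length (filter (\<lambda>a. a = 1) A) = r
                  \<and> length (filter (\<lambda>a. a = -1) A) = t}"

definition seq_swap :: "int list \<Rightarrow> nat \<Rightarrow> int list" where
  "seq_swap A i = A[i - 1 := A ! i, i := A ! (i - 1)]"

definition valid :: "nat \<Rightarrow> nat \<Rightarrow> nat list \<Rightarrow> bool" where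
  "valid N n ps \<longleftrightarrow> length ps = n \<and> (\<forall>p\<in>set ps. p < N)"

(* coordinate model of M (x) V^{(x)A}, n = length A *)
definition Tens :: "nat \<Rightarrow> nat \<Rightarrow> (nat list \<Rightarrow> 'm::zero) set" where
  "Tens N n = {x. \<forall>ps. \<not> valid N n ps \<longrightarrow> x ps = 0}"

(* E_ab acting on factor k only (k = 0: the factor M; k >= 1: position k of A) *)
definition facact :: "nat \<Rightarrow> (nat \<Rightarrow> nat \<Rightarrow> 'm \<Rightarrow> 'm) \<Rightarrow> int list \<Rightarrow> nat \<Rightarrow> nat \<Rightarrow> nat
                        \<Rightarrow> (nat list \<Rightarrow> 'm::ab_group_add) \<Rightarrow> nat list \<Rightarrow> 'm" where
  "facact N act A k a b x = (\<lambda>ps. if valid N (length A) ps then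
      (if k = 0 then act a b (x ps)
       else if A ! (k - 1) = 1 then (if ps ! (k - 1) = a then x (ps[k - 1 := b]) else 0)
       else (if ps ! (k - 1) = b then - x (ps[k - 1 := a]) else 0))
    else 0)"

definition glact :: "nat \<Rightarrow> (nat \<Rightarrow> nat \<Rightarrow> 'm \<Rightarrow> 'm) \<Rightarrow> int list \<Rightarrow> nat \<Rightarrow> nat
                        \<Rightarrow> (nat list \<Rightarrow> 'm::ab_group_add) \<Rightarrow> nat list \<Rightarrow> 'm" where
  "glact N act A a b x = (\<lambda>ps. \<Sum>k\<in>{0..length A}. facact N act A k a b x ps)"

definition Omega :: "nat \<Rightarrow> (nat \<Rightarrow> nat \<Rightarrow> 'm \<Rightarrow> 'm) \<Rightarrow> int list \<Rightarrow> nat \<Rightarrow> nat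
                        \<Rightarrow> (nat list \<Rightarrow> 'm::ab_group_add) \<Rightarrow> nat list \<Rightarrow> 'm" where
  "Omega N act A k l x = (\<lambda>ps. \<Sum>a<N. \<Sum>b<N. facact N act A k a b (facact N act A l b a x) ps)"

definition yop :: "nat \<Rightarrow> (complex \<Rightarrow> 'm \<Rightarrow> 'm) \<Rightarrow> (nat \<Rightarrow> nat \<Rightarrow> 'm \<Rightarrow> 'm) \<Rightarrow> int list \<Rightarrow> nat
                        \<Rightarrow> (nat list \<Rightarrow> 'm::ab_group_add) \<Rightarrow> nat list \<Rightarrow> 'm" where
  "yop N smul act A i x = (\<lambda>ps. if valid N (length A) ps then
      (\<Sum>k<i. Omega N act A k i x ps) + smul (of_nat N / 2) (x ps) else 0)"

definition sop :: "nat \<Rightarrow> nat \<Rightarrow> nat \<Rightarrow> (nat list \<Rightarrow> 'm::zero) \<Rightarrow> nat list \<Rightarrow> 'm" where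
  "sop N n i x = (\<lambda>ps. if valid N n ps then x (ps[i - 1 := ps ! i, i := ps ! (i - 1)]) else 0)"

(* w_p (x) w_q^* |-> delta_pq sum_k w_k (x) w_k^*  (operator e_i), resp.
   |-> delta_pq sum_k w_k^* (x) w_k (operator hat e_i): same coordinates *)
definition eop :: "nat \<Rightarrow> nat \<Rightarrow> nat \<Rightarrow> (nat list \<Rightarrow> 'm::comm_monoid_add) \<Rightarrow> nat list \<Rightarrow> 'm" where
  "eop N n i x = (\<lambda>ps. if valid N n ps \<and> ps ! (i - 1) = ps ! i
                        then (\<Sum>p<N. x (ps[i - 1 := p, i := p])) else 0)"

(* generators of the degenerate affine walled Brauer category:
   Sp i = s_i, Sh i = hat s_i, Ep i = e_i, Eh i = hat e_i, Yg i = y_i *)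
datatype gen = Sp nat | Sh nat | Ep nat | Eh nat | Yg nat

fun gen_defined :: "int list \<Rightarrow> gen \<Rightarrow> bool" where
  "gen_defined A (Sp i) = (1 \<le> i \<and> i < length A \<and> A ! (i - 1) = A ! i)"
| "gen_defined A (Sh i) = (1 \<le> i \<and> i < length A \<and> A ! (i - 1) \<noteq> A ! i)"
| "gen_defined A (Ep i) = (1 \<le> i \<and> i < length A \<and> A ! (i - 1) \<noteq> A ! i)"
| "gen_defined A (Eh i) = (1 \<le> i \<and> i < length A \<and> A ! (i - 1) \<noteq> A ! i)"
| "gen_defined A (Yg i) = (1 \<le> i \<and> i \<le> length A)"

fun gen_target :: "int list \<Rightarrow> gen \<Rightarrow> int list" where
  "gen_target A (Sp i) = A"
| "gen_target A (Sh i) = seq_swap A i"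
| "gen_target A (Ep i) = A"
| "gen_target A (Eh i) = seq_swap A i"
| "gen_target A (Yg i) = A"

fun gen_op :: "nat \<Rightarrow> (complex \<Rightarrow> 'm \<Rightarrow> 'm) \<Rightarrow> (nat \<Rightarrow> nat \<Rightarrow> 'm \<Rightarrow> 'm) \<Rightarrow> int list \<Rightarrow> gen
                 \<Rightarrow> (nat list \<Rightarrow> 'm::ab_group_add) \<Rightarrow> nat list \<Rightarrow> 'm" where
  "gen_op N smul act A (Sp i) = sop N (length A) i"
| "gen_op N smul act A (Sh i) = sop N (length A) i"
| "gen_op N smul act A (Ep i) = eop N (length A) i"
| "gen_op N smul act A (Eh i) = eop N (length A) i"
| "gen_op N smul act A (Yg i) = yop N smul act A i"

(* words: [f1, ..., fm] stands for the composite f1 f2 ... fm (fm applied first) *)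
definition word_target :: "int list \<Rightarrow> gen list \<Rightarrow> int list" where
  "word_target A w = foldr (\<lambda>g B. gen_target B g) w A"

fun word_defined :: "int list \<Rightarrow> gen list \<Rightarrow> bool" where
  "word_defined A [] = True"
| "word_defined A (g # w) = (word_defined A w \<and> gen_defined (word_target A w) g)"

fun word_op :: "nat \<Rightarrow> (complex \<Rightarrow> 'm \<Rightarrow> 'm) \<Rightarrow> (nat \<Rightarrow> nat \<Rightarrow> 'm \<Rightarrow> 'm) \<Rightarrow> int list \<Rightarrow> gen list
                 \<Rightarrow> (nat list \<Rightarrow> 'm::ab_group_add) \<Rightarrow> nat list \<Rightarrow> 'm" where
  "word_op N smul act A [] x = x"
| "word_op N smul act A (g # w) x = gen_op N smul act (word_target A w) g (word_op N smul act A w x)"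

type_synonym lcomb = "(complex \<times> gen list) list"

definition lc_ok :: "int list \<Rightarrow> lcomb \<Rightarrow> int list \<Rightarrow> bool" where
  "lc_ok A c T \<longleftrightarrow> (\<forall>(z, w) \<in> set c. word_defined A w \<and> word_target A w = T)"

definition lc_op :: "nat \<Rightarrow> (complex \<Rightarrow> 'm \<Rightarrow> 'm) \<Rightarrow> (nat \<Rightarrow> nat \<Rightarrow> 'm \<Rightarrow> 'm) \<Rightarrow> int list \<Rightarrow> lcomb
                 \<Rightarrow> (nat list \<Rightarrow> 'm::ab_group_add) \<Rightarrow> nat list \<Rightarrow> 'm" where
  "lc_op N smul act A c x = (\<lambda>ps. sum_list (map (\<lambda>(z, w). smul z (word_op N smul act A w x ps)) c))"

abbreviation one :: "gen list \<Rightarrow> lcomb" where "one w \<equiv> [(1, w)]"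

definition dS :: "nat \<Rightarrow> gen set" where "dS i = {Sp i, Sh i}"
definition dE :: "nat \<Rightarrow> gen set" where "dE i = {Ep i, Eh i}"

definition far :: "nat \<Rightarrow> nat \<Rightarrow> bool" where "far i j \<longleftrightarrow> i + 1 < j \<or> j + 1 < i"

(* defining relations (1)-(8) of VB_{r,t}(omega), with source object A; each relation
   is imposed whenever both sides are defined with the same source and target *)
definition VB_rels :: "(nat \<Rightarrow> complex) \<Rightarrow> int list \<Rightarrow> (lcomb \<times> lcomb) set" where
  "VB_rels \<omega> A =
     \<comment> \<open>(1)\<close>
     {(one [a, b], one []) | i a b. a \<in> dS i \<and> b \<in> dS i}
   \<union> \<comment> \<open>(2)\<close>
     {(one [a, b], one [c, d]) | i j a b c d. far i j \<and> a \<in> dS i \<and> b \<in> dS j \<and> c \<in> dS j \<and> d \<in> dS i}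
   \<union> {(one [a, b, c], one [d, e, f]) | i a b c d e f.
        a \<in> dS i \<and> b \<in> dS (i + 1) \<and> c \<in> dS i \<and> d \<in> dS (i + 1) \<and> e \<in> dS i \<and> f \<in> dS (i + 1)}
   \<union> {(one [a, Yg j], one [Yg j, b]) | i j a b. j \<noteq> i \<and> j \<noteq> i + 1 \<and> a \<in> dS i \<and> b \<in> dS i}
   \<union> \<comment> \<open>(3)\<close>
     {(one [Ep i, Ep i], [(\<omega> 0, [Ep i])]) | i. True}
   \<union> \<comment> \<open>(4)\<close>
     {(one ([Ep 1] @ replicate k (Yg 1) @ [Ep 1]), [(\<omega> k, [Ep 1])]) | k.
        length A \<ge> 2 \<and> A ! 0 = 1 \<and> A ! 1 = -1}
   \<union> \<comment> \<open>(5)\<close>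
     {(one [a, b], one [c, d]) | i j a b c d. far i j \<and> a \<in> dS i \<and> b \<in> dE j \<and> c \<in> dE j \<and> d \<in> dS i}
   \<union> {(one [a, b], one [c, d]) | i j a b c d. far i j \<and> a \<in> dE i \<and> b \<in> dE j \<and> c \<in> dE j \<and> d \<in> dE i}
   \<union> {(one [a, Yg j], one [Yg j, b]) | i j a b. j \<noteq> i \<and> j \<noteq> i + 1 \<and> a \<in> dE i \<and> b \<in> dE i}
   \<union> {(one [Yg i, Yg j], one [Yg j, Yg i]) | i j. True}
   \<union> \<comment> \<open>(6)\<close>
     {(one [Sh i, a], one [b]) | i a b. a \<in> dE i \<and> b \<in> dE i}
   \<union> {(one [a, Sh i], one [b]) | i a b. a \<in> dE i \<and> b \<in> dE i}
   \<union> {(one [a, b, c], one [d, e]) | i a b c d e.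
        a \<in> dS i \<and> b \<in> dE (i + 1) \<and> c \<in> dE i \<and> d \<in> dS (i + 1) \<and> e \<in> dE i}
   \<union> {(one [a, b, c], one [d, e]) | i a b c d e.
        a \<in> dE i \<and> b \<in> dE (i + 1) \<and> c \<in> dS i \<and> d \<in> dE i \<and> e \<in> dS (i + 1)}
   \<union> {(one [a, b, c], one [d, e]) | i a b c d e.
        a \<in> dE (i + 1) \<and> b \<in> dE i \<and> c \<in> dS (i + 1) \<and> d \<in> dE (i + 1) \<and> e \<in> dS i}
   \<union> {(one [a, b, c], one [d, e]) | i a b c d e.
        a \<in> dS (i + 1) \<and> b \<in> dE i \<and> c \<in> dE (i + 1) \<and> d \<in> dS i \<and> e \<in> dE (i + 1)}
   \<union> {(one [a, b, c], one [d]) | i a b c d.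
        a \<in> dE (i + 1) \<and> b \<in> dE i \<and> c \<in> dE (i + 1) \<and> d \<in> dE (i + 1)}
   \<union> {(one [a, b, c], one [d]) | i a b c d.
        a \<in> dE i \<and> b \<in> dE (i + 1) \<and> c \<in> dE i \<and> d \<in> dE i}
   \<union> \<comment> \<open>(7)\<close>
     {([(1, [Sp i, Yg i]), (-1, [Yg (i + 1), Sp i])], [(-1, [])]) | i. True}
   \<union> {([(1, [Sp i, Yg (i + 1)]), (-1, [Yg i, Sp i])], [(1, [])]) | i. True}
   \<union> {([(1, [Sh i, Yg i]), (-1, [Yg (i + 1), Sh i])], [(1, [Eh i])]) | i. True}
   \<union> {([(1, [Sh i, Yg (i + 1)]), (-1, [Yg i, Sh i])], [(-1, [Eh i])]) | i. True}
   \<union> \<comment> \<open>(8)\<close>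
     {([(1, [a, Yg i]), (1, [a, Yg (i + 1)])], []) | i a. a \<in> dE i}
   \<union> {([(1, [Yg i, a]), (1, [Yg (i + 1), a])], []) | i a. a \<in> dE i}"

(* omega_k(M): the scalar by which  M -> M (x) V (x) V^* --y_1^k--> M (x) V (x) V^* -> M  acts *)
definition omega_comp :: "nat \<Rightarrow> (complex \<Rightarrow> 'm \<Rightarrow> 'm) \<Rightarrow> (nat \<Rightarrow> nat \<Rightarrow> 'm \<Rightarrow> 'm) \<Rightarrow> nat \<Rightarrow> 'm::ab_group_add \<Rightarrow> 'm" where
  "omega_comp N smul act k m =
     (let x0 = (\<lambda>ps. if valid N 2 ps \<and> ps ! 0 = ps ! 1 then m else 0);
          X = (yop N smul act [1, -1] 1 ^^ k) x0
      in \<Sum>i<N. X [i, i])"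

definition omegaM :: "nat \<Rightarrow> (complex \<Rightarrow> 'm::ab_group_add \<Rightarrow> 'm) \<Rightarrow> (nat \<Rightarrow> nat \<Rightarrow> 'm \<Rightarrow> 'm) \<Rightarrow> nat \<Rightarrow> complex" where
  "omegaM N smul act k = (SOME c. \<forall>m::'m. omega_comp N smul act k m = smul c m)"

end

theory Submission
  imports Defs "HOL-Library.Function_Algebras"
begin


definition cmt :: "('f \<Rightarrow> 'f) \<Rightarrow> ('f \<Rightarrow> 'f) \<Rightarrow> bool" where
  "cmt f g \<longleftrightarrow> (\<forall>x. f (g x) = g (f x))"

definition addop :: "('f::ab_group_add \<Rightarrow> 'f) \<Rightarrow> bool" where
  "addop f \<longleftrightarrow> (\<forall>x y. f (x + y) = f x + f y)"

lemma addop_zero: "addop f \<Longrightarrow> f 0 = 0"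
  unfolding addop_def by (metis add_cancel_left_left add_0)

lemma addop_sum: "addop f \<Longrightarrow> f (\<Sum>i\<in>I. g i) = (\<Sum>i\<in>I. f (g i))"
proof (induction I rule: infinite_finite_induct)
  case (insert x F) then show ?case by (simp add: addop_def)
qed (auto simp: addop_zero)

lemma addop_minus: "addop f \<Longrightarrow> f (- x) = - f x"
proof -
  assume a: "addop f"
  have "f (- x) + f x = 0" using a addop_zero[OF a] unfolding addop_def by (metis add.left_inverse)
  then show ?thesis by (simp add: eq_neg_iff_add_eq_0)
qed

lemma addop_diff: "addop f \<Longrightarrow> f (x - y) = f x - f y"
  by (metis addop_def addop_minus diff_conv_add_uminus)

lemma addop_if: "addop f \<Longrightarrow> f (if P then x else 0) = (if P then f x else 0)"
  by (simp add: addop_zero)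

lemma addop_sumop: "(\<And>i. i \<in> I \<Longrightarrow> addop (g i)) \<Longrightarrow> addop (\<lambda>x. \<Sum>i\<in>I. g i x)"
  unfolding addop_def by (simp add: sum.distrib)

lemma addop_comp: "addop f \<Longrightarrow> addop g \<Longrightarrow> addop (\<lambda>x. f (g x))"
  unfolding addop_def by simp

lemma addop_plus: "addop f \<Longrightarrow> addop g \<Longrightarrow> addop (\<lambda>x. f x + g x)"
  unfolding addop_def by (simp add: algebra_simps)

lemma cmt_sym: "cmt f g \<Longrightarrow> cmt g f" unfolding cmt_def by simp

lemma cmt_sum: "addop f \<Longrightarrow> (\<And>i. i \<in> I \<Longrightarrow> cmt f (g i)) \<Longrightarrow> cmt f (\<lambda>x. \<Sum>i\<in>I. g i x)"
  unfolding cmt_def by (simp add: addop_sum)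

lemma cmt_comp: "cmt f g \<Longrightarrow> cmt f h \<Longrightarrow> cmt f (\<lambda>x. g (h x))"
  unfolding cmt_def by simp

lemma cmt_plus: "addop f \<Longrightarrow> cmt f g \<Longrightarrow> cmt f h \<Longrightarrow> cmt f (\<lambda>x. g x + h x)"
  unfolding cmt_def addop_def by simp

lemma cmt_id: "cmt f (\<lambda>x. x)" unfolding cmt_def by simp

locale opsys =
  fixes N n :: nat and E :: "nat \<Rightarrow> nat \<Rightarrow> nat \<Rightarrow> 'f::ab_group_add \<Rightarrow> 'f"
  assumes E_add: "k \<le> n \<Longrightarrow> a < N \<Longrightarrow> b < N \<Longrightarrow> addop (E k a b)"
  and E_comm: "k \<le> n \<Longrightarrow> l \<le> n \<Longrightarrow> k \<noteq> l \<Longrightarrow> a < N \<Longrightarrow> b < N \<Longrightarrow> c < N \<Longrightarrow> d < N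
      \<Longrightarrow> E k a b (E l c d x) = E l c d (E k a b x)"
  and E_brk: "k \<le> n \<Longrightarrow> a < N \<Longrightarrow> b < N \<Longrightarrow> c < N \<Longrightarrow> d < N \<Longrightarrow>
      E k a b (E k c d x) = E k c d (E k a b x) + (if b = c then E k a d x else 0) - (if d = a then E k c b x else 0)"
begin

definition Om :: "nat \<Rightarrow> nat \<Rightarrow> 'f \<Rightarrow> 'f" where
  "Om k l x = (\<Sum>a<N. \<Sum>b<N. E k a b (E l b a x))"

definition G :: "nat \<Rightarrow> nat \<Rightarrow> nat \<Rightarrow> 'f \<Rightarrow> 'f" where
  "G m a b x = (\<Sum>k\<in>{0..m}. E k a b x)"

definition Ys :: "nat \<Rightarrow> 'f \<Rightarrow> 'f" where
  "Ys i x = (\<Sum>k<i. Om k i x)"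

lemma Om_add: "k \<le> n \<Longrightarrow> l \<le> n \<Longrightarrow> addop (Om k l)"
proof -
  assume "k \<le> n" "l \<le> n"
  then show ?thesis unfolding Om_def[abs_def]
    by (intro addop_sumop) (auto intro!: addop_comp[of "E k _ _" "E l _ _"] E_add)
qed

lemma G_add: "m \<le> n \<Longrightarrow> a < N \<Longrightarrow> b < N \<Longrightarrow> addop (G m a b)"
  unfolding G_def[abs_def]
  by (intro addop_sumop E_add) auto

lemma Ys_add: "i \<le> n \<Longrightarrow> addop (Ys i)"
  unfolding Ys_def[abs_def]
  by (intro addop_sumop Om_add) auto

lemma cmt_E: "k \<le> n \<Longrightarrow> l \<le> n \<Longrightarrow> k \<noteq> l \<Longrightarrow> a < N \<Longrightarrow> b < N \<Longrightarrow> c < N \<Longrightarrow> d < N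
      \<Longrightarrow> cmt (E k a b) (E l c d)"
  unfolding cmt_def using E_comm by blast

lemma cmt_Om: "addop f \<Longrightarrow> (\<And>a b. a < N \<Longrightarrow> b < N \<Longrightarrow> cmt f (E k a b)) \<Longrightarrow>
   (\<And>a b. a < N \<Longrightarrow> b < N \<Longrightarrow> cmt f (E l a b)) \<Longrightarrow> cmt f (Om k l)"
  unfolding Om_def[abs_def]
  by (intro cmt_sum addop_sumop) (auto intro!: cmt_comp[of f "E k _ _" "E l _ _"])

lemma cmt_E_Om: "m \<le> n \<Longrightarrow> k \<le> n \<Longrightarrow> l \<le> n \<Longrightarrow> m \<noteq> k \<Longrightarrow> m \<noteq> l \<Longrightarrow> c < N \<Longrightarrow> d < N
   \<Longrightarrow> cmt (E m c d) (Om k l)"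
  by (intro cmt_Om E_add cmt_E) auto

lemma sum_if_eq: "d < N \<Longrightarrow> (\<Sum>a<N. if d = a then f a else 0) = (f d :: 'g::comm_monoid_add)"
  by (simp add: sum.delta)
lemma sum_if_eq': "d < N \<Longrightarrow> (\<Sum>a<N. if a = d then f a else 0) = (f d :: 'g::comm_monoid_add)"
  by (simp add: sum.delta')


lemma pair_cmt:
  assumes kl: "k \<le> n" "l \<le> n" "k \<noteq> l" and cd: "c < N" "d < N"
  shows "E k c d (Om k l x) + E l c d (Om k l x) = Om k l (E k c d x + E l c d x)"
proof -
  have A: "\<And>a b. a<N \<Longrightarrow> b<N \<Longrightarrow> E k c d (E k a b (E l b a x)) = E k a b (E l b a (E k c d x))
     + (if d = a then E k c b (E l b a x) else 0) - (if b = c then E k a d (E l b a x) else 0)"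
  proof -
    fix a b assume ab: "a<N" "b<N"
    have "E k c d (E k a b (E l b a x)) = E k a b (E k c d (E l b a x))
     + (if d = a then E k c b (E l b a x) else 0) - (if b = c then E k a d (E l b a x) else 0)"
      using E_brk[OF kl(1) cd ab] by simp
    also have "E k c d (E l b a x) = E l b a (E k c d x)" using E_comm kl cd ab by metis
    finally show "?thesis a b" .
  qed
  have B: "\<And>a b. a<N \<Longrightarrow> b<N \<Longrightarrow> E l c d (E k a b (E l b a x)) = E k a b (E l b a (E l c d x))
     + (if d = b then E k a b (E l c a x) else 0) - (if a = c then E k a b (E l b d x) else 0)"
  proof -
    fix a b assume ab: "a<N" "b<N"
    have "E l c d (E k a b (E l b a x)) = E k a b (E l c d (E l b a x))" using E_comm kl cd ab by metis
    also have "E l c d (E l b a x) = E l b a (E l c d x) + (if d = b then E l c a x else 0) - (if a = c then E l b d x else 0)"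
      using E_brk[OF kl(2) cd ab(2,1)] .
    also have "E k a b (\<dots>) = E k a b (E l b a (E l c d x))
     + (if d = b then E k a b (E l c a x) else 0) - (if a = c then E k a b (E l b d x) else 0)"
      using E_add[OF kl(1) ab] by (simp add: addop_diff addop_if addop_def)
    finally show "?thesis a b" .
  qed
  have ad: "addop (E k c d)" "addop (E l c d)" using E_add kl cd by auto
  have "E k c d (Om k l x) + E l c d (Om k l x) =
     (\<Sum>a<N. \<Sum>b<N. E k c d (E k a b (E l b a x)) + E l c d (E k a b (E l b a x)))"
    unfolding Om_def by (simp add: addop_sum[OF ad(1)] addop_sum[OF ad(2)] sum.distrib)
  also have "\<dots> = (\<Sum>a<N. \<Sum>b<N. E k a b (E l b a (E k c d x)) + E k a b (E l b a (E l c d x)))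
     + ((\<Sum>a<N. \<Sum>b<N. (if d = a then E k c b (E l b a x) else 0))
      - (\<Sum>a<N. \<Sum>b<N. (if b = c then E k a d (E l b a x) else 0))
      + (\<Sum>a<N. \<Sum>b<N. (if d = b then E k a b (E l c a x) else 0))
      - (\<Sum>a<N. \<Sum>b<N. (if a = c then E k a b (E l b d x) else 0)))"
    apply (simp only: sum.distrib[symmetric] sum_subtractf[symmetric])
    apply (intro sum.cong refl)
    apply (simp only: A B lessThan_iff)
    apply (simp only: diff_conv_add_uminus add.assoc)
    by (simp add: algebra_simps)
  also have "(\<Sum>a<N. \<Sum>b<N. (if d = a then E k c b (E l b a x) else 0)) = (\<Sum>b<N. E k c b (E l b d x))"
    using cd by (subst sum.swap) simp
  also have "(\<Sum>a<N. \<Sum>b<N. (if b = c then E k a d (E l b a x) else 0)) = (\<Sum>a<N. E k a d (E l c a x))"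
    using cd by simp
  also have "(\<Sum>a<N. \<Sum>b<N. (if d = b then E k a b (E l c a x) else 0)) = (\<Sum>a<N. E k a d (E l c a x))"
    using cd by simp
  also have "(\<Sum>a<N. \<Sum>b<N. (if a = c then E k a b (E l b d x) else 0)) = (\<Sum>b<N. E k c b (E l b d x))"
    using cd by (subst sum.swap) simp
  also have "(\<Sum>a<N. \<Sum>b<N. E k a b (E l b a (E k c d x)) + E k a b (E l b a (E l c d x)))
     = Om k l (E k c d x + E l c d x)"
    unfolding Om_def using E_add kl
    by (intro sum.cong refl) (simp add: addop_def)
  finally show ?thesis by simp
qed

lemma G_split:
  assumes "k \<le> m" "l \<le> m" "k \<noteq> l"
  shows "G m c d x = (E k c d x + E l c d x) + (\<Sum>j\<in>{0..m} - {k, l}. E j c d x)"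
proof -
  have "{0..m} = {k, l} \<union> ({0..m} - {k, l})" using assms by auto
  then have "G m c d x = (\<Sum>j\<in>{k, l} \<union> ({0..m} - {k, l}). E j c d x)" unfolding G_def by simp
  also have "\<dots> = (\<Sum>j\<in>{k, l}. E j c d x) + (\<Sum>j\<in>{0..m} - {k, l}. E j c d x)"
    by (rule sum.union_disjoint) auto
  finally show ?thesis using assms by simp
qed

lemma cmt_G_Om:
  assumes "k \<le> m" "l \<le> m" "k \<noteq> l" "m \<le> n" "c < N" "d < N"
  shows "cmt (G m c d) (Om k l)"
  unfolding cmt_def
proof
  fix x
  have "G m c d (Om k l x) = (E k c d (Om k l x) + E l c d (Om k l x)) + (\<Sum>j\<in>{0..m} - {k, l}. E j c d (Om k l x))"
    by (rule G_split) (use assms in auto)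
  also have "\<dots> = Om k l (E k c d x + E l c d x) + (\<Sum>j\<in>{0..m} - {k, l}. Om k l (E j c d x))"
    using assms pair_cmt[of k l c d x] cmt_E_Om[of _ k l c d] unfolding cmt_def
    by (intro arg_cong2[where f="(+)"] sum.cong refl) auto
  also have "\<dots> = Om k l ((E k c d x + E l c d x) + (\<Sum>j\<in>{0..m} - {k, l}. E j c d x))"
    using Om_add[of k l] assms by (simp add: addop_sum addop_def)
  also have "\<dots> = Om k l (G m c d x)"
    by (subst G_split[of k m l]) (use assms in auto)
  finally show "G m c d (Om k l x) = Om k l (G m c d x)" .
qed

lemma cmt_G_Ys:
  assumes "i \<le> m" "m \<le> n" "c < N" "d < N"
  shows "cmt (G m c d) (Ys i)"
  unfolding Ys_def[abs_def] using assms
  by (intro cmt_sum G_add cmt_G_Om) auto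

lemma cmt_Om_disj:
  assumes "k \<le> n" "l \<le> n" "k' \<le> n" "l' \<le> n" "k \<noteq> k'" "k \<noteq> l'" "l \<noteq> k'" "l \<noteq> l'"
  shows "cmt (Om k l) (Om k' l')"
  using assms by (intro cmt_Om Om_add cmt_sym[OF cmt_E_Om]) auto

lemma Om_sym:
  assumes "k \<le> n" "l \<le> n" "k \<noteq> l"
  shows "Om l k x = Om k l x"
  unfolding Om_def using assms E_comm
  by (subst sum.swap) (intro sum.cong refl, metis lessThan_iff)

lemma Ys_Gpart:
  assumes "i < j" "j \<le> n"
  shows "Ys j x = (\<Sum>a<N. \<Sum>b<N. G i a b (E j b a x)) + (\<Sum>l\<in>{i<..<j}. Om l j x)"
proof -
  have "{..<j} = {0..i} \<union> {i<..<j}" using assms by auto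
  then have "Ys j x = (\<Sum>l\<in>{0..i} \<union> {i<..<j}. Om l j x)"
    unfolding Ys_def by simp
  also have "\<dots> = (\<Sum>l\<in>{0..i}. Om l j x) + (\<Sum>l\<in>{i<..<j}. Om l j x)"
    by (rule sum.union_disjoint) auto
  also have "(\<Sum>l\<in>{0..i}. Om l j x) = (\<Sum>a<N. \<Sum>b<N. G i a b (E j b a x))"
    unfolding Om_def G_def
    by (subst sum.swap, rule sum.cong[OF refl], subst sum.swap, rule refl)
  finally show ?thesis .
qed

lemma cmt_Om_G:
  assumes "k < i" "i \<le> n" "a < N" "b < N"
  shows "cmt (Om k i) (G i a b)"
proof -
  have "cmt (G i a b) (Om k i)" using assms by (intro cmt_G_Om) auto
  then show ?thesis by (rule cmt_sym)
qed

lemma cmt_Ys_Ys_lt: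
  assumes "i < j" "j \<le> n"
  shows "cmt (Ys i) (Ys j)"
proof -
  have ad: "addop (Ys i)" using assms by (intro Ys_add) auto
  have c1: "cmt (Ys i) (\<lambda>x. G i a b (E j b a x))" if ab: "a < N" "b < N" for a b
    proof (rule cmt_comp[of _ "G i a b" "E j b a"])
      show "cmt (Ys i) (G i a b)" using assms ab by (intro cmt_sym[OF cmt_G_Ys]) auto
      show "cmt (Ys i) (E j b a)" unfolding Ys_def[abs_def] using assms ab
        by (intro cmt_sym[OF cmt_sum] E_add cmt_E_Om) auto
    qed
  have c2: "cmt (Ys i) (Om l j)" if l: "l \<in> {i<..<j}" for l
    unfolding Ys_def[abs_def] using assms l
    by (intro cmt_sym[OF cmt_sum] Om_add cmt_Om_disj) auto
  have c3: "cmt (Ys i) (\<lambda>x. \<Sum>a<N. \<Sum>b<N. G i a b (E j b a x))"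
    using ad c1 by (intro cmt_sum[OF ad]) (auto intro!: cmt_sum[OF ad])
  have c4: "cmt (Ys i) (\<lambda>x. \<Sum>l\<in>{i<..<j}. Om l j x)"
    using c2 by (intro cmt_sum[OF ad])
  have "cmt (Ys i) (\<lambda>x. (\<Sum>a<N. \<Sum>b<N. G i a b (E j b a x)) + (\<Sum>l\<in>{i<..<j}. Om l j x))"
    by (rule cmt_plus[OF ad c3 c4])
  moreover have "(\<lambda>x. (\<Sum>a<N. \<Sum>b<N. G i a b (E j b a x)) + (\<Sum>l\<in>{i<..<j}. Om l j x)) = Ys j"
    using Ys_Gpart[OF assms] by auto
  ultimately show ?thesis by simp
qed

lemma cmt_Ys_Ys:
  assumes "i \<le> n" "j \<le> n"
  shows "cmt (Ys i) (Ys j)"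
  using assms cmt_Ys_Ys_lt[of i j] cmt_Ys_Ys_lt[of j i] cmt_sym
  by (cases i j rule: linorder_cases) (auto simp: cmt_def)

lemma cmt_D_Om: "addop D \<Longrightarrow> (\<And>k a b. k \<le> n \<Longrightarrow> a < N \<Longrightarrow> b < N \<Longrightarrow> cmt D (E k a b))
   \<Longrightarrow> k \<le> n \<Longrightarrow> l \<le> n \<Longrightarrow> cmt D (Om k l)"
  by (intro cmt_Om) auto

lemma cmt_D_Ys: "addop D \<Longrightarrow> (\<And>k a b. k \<le> n \<Longrightarrow> a < N \<Longrightarrow> b < N \<Longrightarrow> cmt D (E k a b))
   \<Longrightarrow> i \<le> n \<Longrightarrow> cmt D (Ys i)"
  unfolding Ys_def[abs_def] by (intro cmt_sum cmt_D_Om) auto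

lemma cmt_D_G: "addop D \<Longrightarrow> (\<And>k a b. k \<le> n \<Longrightarrow> a < N \<Longrightarrow> b < N \<Longrightarrow> cmt D (E k a b))
   \<Longrightarrow> m \<le> n \<Longrightarrow> a < N \<Longrightarrow> b < N \<Longrightarrow> cmt D (G m a b)"
  unfolding G_def[abs_def] by (intro cmt_sum) auto

end


lemma valid_upd: "valid N n ps \<Longrightarrow> b < N \<Longrightarrow> valid N n (ps[j:=b])"
  unfolding valid_def by (auto dest: set_update_subset_insert[THEN subsetD])

lemma valid_nth: "valid N n ps \<Longrightarrow> j < n \<Longrightarrow> ps ! j < N"
  unfolding valid_def by auto

lemma valid_len: "valid N n ps \<Longrightarrow> length ps = n"
  unfolding valid_def by auto

lemma if_app: "(if P then f else g) x = (if P then f x else g x)"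
  by simp

lemma upd_id2: "i \<noteq> j \<Longrightarrow> xs[i:=x, j := xs!j] = xs[i:=x]"
  by (metis list_update_id list_update_swap)

lemmas upd_simps = nth_list_update list_update_swap upd_id2

locale glm =
  fixes N :: nat and smul :: "complex \<Rightarrow> 'm::ab_group_add \<Rightarrow> 'm" and act :: "nat \<Rightarrow> nat \<Rightarrow> 'm \<Rightarrow> 'm"
  assumes gl: "gl_module N smul act"
begin

lemma md: "module smul" using gl unfolding gl_module_def by auto

sublocale M: module smul by (rule md)

lemma gl2: "\<forall>i<N. \<forall>j<N. (\<forall>x y. act i j (x + y) = act i j x + act i j y) \<and>
                    (\<forall>c x. act i j (smul c x) = smul c (act i j x))"
  using gl unfolding gl_module_def by (elim conjE)

lemma gl3: "\<forall>i<N. \<forall>j<N. \<forall>k<N. \<forall>l<N. \<forall>x.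
        act i j (act k l x) - act k l (act i j x)
          = (if j = k then act i l x else 0) - (if l = i then act k j x else 0)"
  using gl unfolding gl_module_def by (elim conjE)

lemma act_add: "i < N \<Longrightarrow> j < N \<Longrightarrow> act i j (x + y) = act i j x + act i j y"
  using gl2 by simp

lemma act_smul: "i < N \<Longrightarrow> j < N \<Longrightarrow> act i j (smul c x) = smul c (act i j x)"
  using gl2 by simp

lemma act_brk: "i < N \<Longrightarrow> j < N \<Longrightarrow> k < N \<Longrightarrow> l < N \<Longrightarrow>
  act i j (act k l x) - act k l (act i j x) = (if j = k then act i l x else 0) - (if l = i then act k j x else 0)"
  using gl3 by blast

lemma act_addop: "i < N \<Longrightarrow> j < N \<Longrightarrow> addop (act i j)"
  unfolding addop_def by (simp add: act_add)

lemma act_0[simp]: "i < N \<Longrightarrow> j < N \<Longrightarrow> act i j 0 = 0"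
  using addop_zero[OF act_addop] .

lemma act_neg[simp]: "i < N \<Longrightarrow> j < N \<Longrightarrow> act i j (- x) = - act i j x"
  using addop_minus[OF act_addop] .

lemma act_diff: "i < N \<Longrightarrow> j < N \<Longrightarrow> act i j (x - y) = act i j x - act i j y"
  using addop_diff[OF act_addop] .

lemma act_sum: "i < N \<Longrightarrow> j < N \<Longrightarrow> act i j (\<Sum>k\<in>I. f k) = (\<Sum>k\<in>I. act i j (f k))"
  using addop_sum[OF act_addop] .

abbreviation fa where "fa A \<equiv> facact N act A"

lemma fa_add: "a < N \<Longrightarrow> b < N \<Longrightarrow> addop (fa A k a b)"
  unfolding addop_def facact_def by (auto simp: act_add fun_eq_iff)

lemma fa_0: "fa A 0 a b x ps = (if valid N (length A) ps then act a b (x ps) else 0)"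
  by (simp add: facact_def)

lemma fa_V: "A ! j = 1 \<Longrightarrow>
   fa A (Suc j) a b x ps = (if valid N (length A) ps \<and> ps ! j = a then x (ps[j := b]) else 0)"
  by (simp add: facact_def)

lemma fa_W: "A ! j \<noteq> 1 \<Longrightarrow>
   fa A (Suc j) a b x ps = (if valid N (length A) ps \<and> ps ! j = b then - x (ps[j := a]) else 0)"
  by (simp add: facact_def)

lemma fa_comm:
  assumes "k \<le> length A" "l \<le> length A" "k \<noteq> l" "a < N" "b < N" "c < N" "d < N"
  shows "fa A k a b (fa A l c d x) = fa A l c d (fa A k a b x)"
proof (rule ext)
  fix ps
  show "fa A k a b (fa A l c d x) ps = fa A l c d (fa A k a b x) ps"
  proof (cases k)
    case k: 0
    then obtain j where l: "l = Suc j" using assms by (cases l) auto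
    show ?thesis
      by (cases "A ! j = 1") (use k l assms in \<open>simp_all add: fa_0 fa_V fa_W valid_upd\<close>)
  next
    case k: (Suc i)
    show ?thesis
    proof (cases l)
      case l: 0
      show ?thesis
        by (cases "A ! i = 1") (use k l assms in \<open>simp_all add: fa_0 fa_V fa_W valid_upd\<close>)
    next
      case l: (Suc j)
      have kl: "i \<noteq> j" using k l assms by auto
      show ?thesis
        by (cases "A ! i = 1"; cases "A ! j = 1")
           (use k l kl assms in \<open>simp_all add: fa_0 fa_V fa_W valid_upd nth_list_update list_update_swap[OF kl]\<close>)
    qed
  qed
qed

lemma fa_brk:
  assumes "k \<le> length A" "a < N" "b < N" "c < N" "d < N"
  shows "fa A k a b (fa A k c d x) = fa A k c d (fa A k a b x) + (if b = c then fa A k a d x else 0) - (if d = a then fa A k c b x else 0)"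
proof (rule ext)
  fix ps
  show "fa A k a b (fa A k c d x) ps = (fa A k c d (fa A k a b x) + (if b = c then fa A k a d x else 0) - (if d = a then fa A k c b x else 0)) ps"
  proof (cases k)
    case k: 0
    have "act a b (act c d (x ps)) = act c d (act a b (x ps)) + (if b = c then act a d (x ps) else 0) - (if d = a then act c b (x ps) else 0)"
      using act_brk[OF assms(2-5), of "x ps"] by (simp add: algebra_simps)
    then show ?thesis using k by (simp add: fa_0 if_app)
  next
    case k: (Suc j)
    have j: "valid N (length A) ps \<Longrightarrow> j < length ps" using assms k by (simp add: valid_def)
    show ?thesis
      by (cases "A ! j = 1") (use k j assms in \<open>auto simp add: fa_V fa_W valid_upd if_app\<close>)
  qed
qed

lemma opsys: "opsys N (length A) (fa A)"
  apply unfold_locales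
    apply (rule fa_add; assumption)
   apply (rule fa_comm; assumption)
  apply (rule fa_brk; assumption)
  done

end


definition swp :: "'a list \<Rightarrow> nat \<Rightarrow> 'a list" where
  "swp ps j = ps[j := ps ! Suc j, Suc j := ps ! j]"

lemma length_swp[simp]: "length (swp ps j) = length ps"
  by (simp add: swp_def)

lemma swp_nth: "Suc j < length ps \<Longrightarrow> swp ps j ! k = (if k = j then ps ! Suc j else if k = Suc j then ps ! j else ps ! k)"
  by (auto simp: swp_def nth_list_update)

lemma swp_swp[simp]: "Suc j < length ps \<Longrightarrow> swp (swp ps j) j = ps"
  by (auto simp: list_eq_iff_nth_eq swp_nth)

lemma swp_upd1: "Suc j < length ps \<Longrightarrow> (swp ps j)[j := b] = swp (ps[Suc j := b]) j"
  by (auto simp: list_eq_iff_nth_eq swp_nth nth_list_update)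
lemma swp_upd2: "Suc j < length ps \<Longrightarrow> (swp ps j)[Suc j := b] = swp (ps[j := b]) j"
  by (auto simp: list_eq_iff_nth_eq swp_nth nth_list_update)
lemma swp_upd3: "Suc j < length ps \<Longrightarrow> l < length ps \<Longrightarrow> l \<noteq> j \<Longrightarrow> l \<noteq> Suc j \<Longrightarrow> (swp ps j)[l := b] = swp (ps[l := b]) j"
  by (auto simp: list_eq_iff_nth_eq swp_def nth_list_update)

lemma seq_swap_swp: "seq_swap A (Suc j) = swp A j"
  by (simp add: seq_swap_def swp_def)

lemma valid_swp: "valid N n ps \<Longrightarrow> Suc j < n \<Longrightarrow> valid N n (swp ps j)"
  unfolding valid_def swp_def by (auto dest!: set_update_subset_insert[THEN subsetD])

lemma valid_swp_iff: "Suc j < n \<Longrightarrow> valid N n (swp ps j) = valid N n ps"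
  by (metis length_swp swp_swp valid_def valid_swp)

context glm begin

lemma sop_S: "sop N n (Suc j) x ps = (if valid N n ps then x (swp ps j) else 0)"
  by (simp add: sop_def swp_def)

definition sg :: "nat \<Rightarrow> nat \<Rightarrow> nat" where
  "sg j k = (if k = Suc j then Suc (Suc j) else if k = Suc (Suc j) then Suc j else k)"

lemma sop_fa:
  assumes j: "Suc j < length A" and k: "k \<le> length A" and ab: "a < N" "b < N"
  shows "sop N (length A) (Suc j) (fa A k a b x) = fa (swp A j) (sg j k) a b (sop N (length A) (Suc j) x)"
proof (rule ext)
  fix ps
  show "sop N (length A) (Suc j) (fa A k a b x) ps = fa (swp A j) (sg j k) a b (sop N (length A) (Suc j) x) ps"
  proof (cases "valid N (length A) ps")
    case False then show ?thesis by (simp add: sop_S facact_def)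
  next
    case v: True
    then have lp: "length ps = length A" by (simp add: valid_def)
    show ?thesis
    proof (cases k)
      case 0
      then show ?thesis using v j by (simp add: sop_S fa_0 sg_def valid_swp)
    next
      case (Suc l)
      consider "l = j" | "l = Suc j" | "l \<noteq> j" "l \<noteq> Suc j" by blast
      then show ?thesis
      proof cases
        case 1
        then show ?thesis using v j Suc lp ab
          by (cases "A ! j = 1") (simp_all add: sop_S fa_V fa_W sg_def valid_swp valid_upd swp_nth swp_upd1 swp_upd2)
      next
        case 2
        then show ?thesis using v j Suc lp ab
          by (cases "A ! Suc j = 1") (simp_all add: sop_S fa_V fa_W sg_def valid_swp valid_upd swp_nth swp_upd1 swp_upd2)
      next
        case 3
        have "l < length A" using Suc k by simp
        then show ?thesis using v j Suc lp ab 3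
          by (cases "A ! l = 1") (simp_all add: sop_S fa_V fa_W sg_def valid_swp valid_upd swp_nth swp_upd3)
      qed
    qed
  qed
qed

end


definition upd3 :: "'a list \<Rightarrow> nat \<Rightarrow> 'a \<Rightarrow> 'a \<Rightarrow> 'a \<Rightarrow> 'a list" where
  "upd3 ps j u v w = ps[j := u, Suc j := v, Suc (Suc j) := w]"

context
  fixes ps :: "'a list" and j :: nat
  assumes L: "Suc (Suc j) < length ps"
begin
lemma U0: "upd3 ps j (ps!j) (ps!Suc j) (ps!Suc (Suc j)) = ps"
  by (simp add: upd3_def)
lemma U1: "upd3 (upd3 ps j u v w) j u' v' w' = upd3 ps j u' v' w'"
  using L by (auto simp: upd3_def list_eq_iff_nth_eq nth_list_update)
lemma U2: "upd3 ps j u v w ! j = u" "upd3 ps j u v w ! Suc j = v" "upd3 ps j u v w ! Suc (Suc j) = w"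
  using L by (simp_all add: upd3_def nth_list_update)
lemma U3: "swp ps j = upd3 ps j (ps!Suc j) (ps!j) (ps!Suc (Suc j))"
  "swp ps (Suc j) = upd3 ps j (ps!j) (ps!Suc (Suc j)) (ps!Suc j)"
  using L by (simp_all add: upd3_def swp_def list_eq_iff_nth_eq nth_list_update)
lemma U4: "ps[j := a] = upd3 ps j a (ps!Suc j) (ps!Suc (Suc j))"
  "ps[Suc j := a] = upd3 ps j (ps!j) a (ps!Suc (Suc j))"
  "ps[Suc (Suc j) := a] = upd3 ps j (ps!j) (ps!Suc j) a"
  using L by (simp_all add: upd3_def list_eq_iff_nth_eq nth_list_update)
lemma length_upd3: "length (upd3 ps j u v w) = length ps"
  by (simp add: upd3_def)
end

lemma U5': assumes v: "valid N n ps" and L: "Suc (Suc j) < n"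
  shows "valid N n (upd3 ps j u v w) = (u < N \<and> v < N \<and> w < N)"
proof -
  have len: "length ps = n" and all: "\<forall>x\<in>set ps. x < N" using v by (auto simp: valid_def)
  have L': "Suc (Suc j) < length ps" using len L by simp
  have sub: "set (upd3 ps j u v w) \<subseteq> insert w (insert v (insert u (set ps)))"
    unfolding upd3_def
    by (meson dual_order.trans insert_mono set_update_subset_insert)
  have mem: "u \<in> set (upd3 ps j u v w)" "v \<in> set (upd3 ps j u v w)" "w \<in> set (upd3 ps j u v w)"
    using U2[OF L'] L' by (metis length_upd3 nth_mem Suc_lessD)+
  have ln: "length (upd3 ps j u v w) = n" using len by (simp add: upd3_def)
  show ?thesis
    unfolding valid_def using sub mem ln all by blast
qed

lemma U_len: "valid N n ps \<Longrightarrow> Suc (Suc j) < n \<Longrightarrow> Suc (Suc j) < length ps"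
  by (simp add: valid_len)

context glm begin

lemma eop_E: "eop N n (Suc j) x ps = (if valid N n ps \<and> ps ! j = ps ! Suc j then (\<Sum>p<N. x (ps[j := p, Suc j := p])) else 0)"
  by (simp add: eop_def)

lemma ops3:
  assumes v: "valid N n ps" and L: "Suc (Suc j) < n" and uvw: "u < N" "v < N" "w < N"
  shows
   "sop N n (Suc j) x (upd3 ps j u v w) = x (upd3 ps j v u w)"
   "sop N n (Suc (Suc j)) x (upd3 ps j u v w) = x (upd3 ps j u w v)"
   "eop N n (Suc j) x (upd3 ps j u v w) = (if u = v then (\<Sum>p<N. x (upd3 ps j p p w)) else 0)"
   "eop N n (Suc (Suc j)) x (upd3 ps j u v w) = (if v = w then (\<Sum>p<N. x (upd3 ps j u p p)) else 0)"
proof -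
  have L': "Suc (Suc j) < length ps" using v L by (simp add: valid_len)
  have L'': "Suc (Suc j) < length (upd3 ps j u v w)" using L' by (simp add: length_upd3)
  have vv: "valid N n (upd3 ps j u v w)" using U5'[OF v L] uvw by simp
  show "sop N n (Suc j) x (upd3 ps j u v w) = x (upd3 ps j v u w)"
    using vv L' L'' by (simp add: sop_S U3 U2 U1)
  show "sop N n (Suc (Suc j)) x (upd3 ps j u v w) = x (upd3 ps j u w v)"
    using vv L' L'' by (simp add: sop_S U3 U2 U1)
  show "eop N n (Suc j) x (upd3 ps j u v w) = (if u = v then (\<Sum>p<N. x (upd3 ps j p p w)) else 0)"
    using vv L' L'' by (simp add: eop_E U4 U2 U1 length_upd3)
  show "eop N n (Suc (Suc j)) x (upd3 ps j u v w) = (if v = w then (\<Sum>p<N. x (upd3 ps j u p p)) else 0)"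
    using vv L' L'' by (simp add: eop_E U4 U2 U1 length_upd3)
qed

lemma ops3_ps:
  assumes v: "valid N n ps" and L: "Suc (Suc j) < n"
  shows "ps = upd3 ps j (ps!j) (ps!Suc j) (ps!Suc (Suc j))" "ps!j < N" "ps!Suc j < N" "ps!Suc (Suc j) < N"
  using v L by (simp_all add: U0 valid_len valid_nth)

end


definition upd2 :: "'a list \<Rightarrow> nat \<Rightarrow> 'a \<Rightarrow> 'a \<Rightarrow> 'a list" where
  "upd2 ps j u v = ps[j := u, Suc j := v]"

definition upd22 :: "'a list \<Rightarrow> nat \<Rightarrow> nat \<Rightarrow> 'a \<Rightarrow> 'a \<Rightarrow> 'a \<Rightarrow> 'a \<Rightarrow> 'a list" where
  "upd22 ps j l u v u' v' = ps[j := u, Suc j := v, l := u', Suc l := v']"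

lemma length_upd2[simp]: "length (upd2 ps j u v) = length ps" by (simp add: upd2_def)
lemma length_upd22[simp]: "length (upd22 ps j l u v u' v') = length ps" by (simp add: upd22_def)
lemma length_upd3'[simp]: "length (upd3 ps j u v w) = length ps" by (simp add: upd3_def)

lemma valid_updI: assumes "valid N n ps" "set qs \<subseteq> set ps \<union> S" "\<forall>x\<in>S. x < N" "length qs = n"
  shows "valid N n qs"
  using assms unfolding valid_def by blast

lemma U5_2: assumes v: "valid N n ps" and L: "Suc j < n"
  shows "valid N n (upd2 ps j u v) = (u < N \<and> v < N)"
proof -
  have len: "length ps = n" and all: "\<forall>x\<in>set ps. x < N" using v by (auto simp: valid_def)
  have sub: "set (upd2 ps j u v) \<subseteq> insert v (insert u (set ps))"
    unfolding upd2_def by (meson dual_order.trans insert_mono set_update_subset_insert)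
  have mem: "u \<in> set (upd2 ps j u v)" "v \<in> set (upd2 ps j u v)"
    using L len unfolding upd2_def by (auto simp: nth_list_update intro!: nth_mem[of j, where xs="ps[j := u, Suc j := v]", simplified]
       nth_mem[of "Suc j", where xs="ps[j := u, Suc j := v]", simplified])
  have ln: "length (upd2 ps j u v) = n" using len by (simp add: upd2_def)
  show ?thesis unfolding valid_def using sub mem ln all by blast
qed

lemma U5_22: assumes v: "valid N n ps" and L: "Suc j < l" "Suc l < n"
  shows "valid N n (upd22 ps j l u v u' v') = (u < N \<and> v < N \<and> u' < N \<and> v' < N)"
proof -
  have len: "length ps = n" and all: "\<forall>x\<in>set ps. x < N" using v by (auto simp: valid_def)
  have sub: "set (upd22 ps j l u v u' v') \<subseteq> insert v' (insert u' (insert v (insert u (set ps))))"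
    unfolding upd22_def by (meson dual_order.trans insert_mono set_update_subset_insert)
  let ?q = "upd22 ps j l u v u' v'"
  have nth: "?q ! j = u" "?q ! Suc j = v" "?q ! l = u'" "?q ! Suc l = v'"
    using L len by (auto simp: upd22_def nth_list_update)
  have ln: "length ?q = n" using len by (simp add: upd22_def)
  have mem: "u \<in> set ?q" "v \<in> set ?q" "u' \<in> set ?q" "v' \<in> set ?q"
    using nth ln L by (metis nth_mem less_trans Suc_lessD)+
  show ?thesis unfolding valid_def using sub mem ln all by blast
qed

context
  fixes ps :: "'a list" and j :: nat
  assumes L: "Suc j < length ps"
begin
lemma V0: "upd2 ps j (ps!j) (ps!Suc j) = ps"
  by (simp add: upd2_def)
lemma V1: "upd2 (upd2 ps j u v) j u' v' = upd2 ps j u' v'"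
  using L by (auto simp: upd2_def list_eq_iff_nth_eq nth_list_update)
lemma V2: "upd2 ps j u v ! j = u" "upd2 ps j u v ! Suc j = v"
  using L by (simp_all add: upd2_def nth_list_update)
lemma V3: "swp ps j = upd2 ps j (ps!Suc j) (ps!j)"
  using L by (simp_all add: upd2_def swp_def)
end

context
  fixes ps :: "'a list" and j l :: nat
  assumes L: "Suc j < l" "Suc l < length ps"
begin
lemma W0: "upd22 ps j l (ps!j) (ps!Suc j) (ps!l) (ps!Suc l) = ps"
  by (simp add: upd22_def)
lemma W1: "upd22 (upd22 ps j l u v u' v') j l a b a' b' = upd22 ps j l a b a' b'"
  using L by (auto simp: upd22_def list_eq_iff_nth_eq nth_list_update)
lemma W2: "upd22 ps j l u v u' v' ! j = u" "upd22 ps j l u v u' v' ! Suc j = v"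
  "upd22 ps j l u v u' v' ! l = u'" "upd22 ps j l u v u' v' ! Suc l = v'"
  using L by (simp_all add: upd22_def nth_list_update)
lemma W3: "swp ps j = upd22 ps j l (ps!Suc j) (ps!j) (ps!l) (ps!Suc l)"
  "swp ps l = upd22 ps j l (ps!j) (ps!Suc j) (ps!Suc l) (ps!l)"
  using L by (auto simp: upd22_def swp_def list_eq_iff_nth_eq nth_list_update)
lemma W4: "ps[j := a, Suc j := b] = upd22 ps j l a b (ps!l) (ps!Suc l)"
  "ps[l := a, Suc l := b] = upd22 ps j l (ps!j) (ps!Suc j) a b"
  using L by (auto simp: upd22_def list_eq_iff_nth_eq nth_list_update)
end

context glm begin

lemma ops2:
  assumes v: "valid N n ps" and L: "Suc j < n" and uv: "u < N" "v < N"
  shows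
   "sop N n (Suc j) x (upd2 ps j u v) = x (upd2 ps j v u)"
   "eop N n (Suc j) x (upd2 ps j u v) = (if u = v then (\<Sum>p<N. x (upd2 ps j p p)) else 0)"
proof -
  have L': "Suc j < length ps" using v L by (simp add: valid_len)
  have L'': "Suc j < length (upd2 ps j u v)" using L' by (simp add: upd2_def)
  have vv: "valid N n (upd2 ps j u v)" using U5_2[OF v L] uv by simp
  show "sop N n (Suc j) x (upd2 ps j u v) = x (upd2 ps j v u)"
    using vv L' L'' by (simp add: sop_S V3 V2 V1)
  show "eop N n (Suc j) x (upd2 ps j u v) = (if u = v then (\<Sum>p<N. x (upd2 ps j p p)) else 0)"
    using vv L' L'' by (simp add: eop_E V2 V1 flip: upd2_def)
qed

lemma ops22:
  assumes v: "valid N n ps" and L: "Suc j < l" "Suc l < n" and uv: "u < N" "v < N" "u' < N" "v' < N"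
  shows
   "sop N n (Suc j) x (upd22 ps j l u v u' v') = x (upd22 ps j l v u u' v')"
   "eop N n (Suc j) x (upd22 ps j l u v u' v') = (if u = v then (\<Sum>p<N. x (upd22 ps j l p p u' v')) else 0)"
   "sop N n (Suc l) x (upd22 ps j l u v u' v') = x (upd22 ps j l u v v' u')"
   "eop N n (Suc l) x (upd22 ps j l u v u' v') = (if u' = v' then (\<Sum>p<N. x (upd22 ps j l u v p p)) else 0)"
proof -
  have L': "Suc l < length ps" using v L by (simp add: valid_len)
  have L'': "Suc l < length (upd22 ps j l u v u' v')" using L' by (simp add: upd22_def)
  have vv: "valid N n (upd22 ps j l u v u' v')" using U5_22[OF v L] uv by simp
  show "sop N n (Suc j) x (upd22 ps j l u v u' v') = x (upd22 ps j l v u u' v')"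
    using vv L L' L'' by (simp add: sop_S W3 W2 W1)
  show "sop N n (Suc l) x (upd22 ps j l u v u' v') = x (upd22 ps j l u v v' u')"
    using vv L L' L'' by (simp add: sop_S W3 W2 W1)
  show "eop N n (Suc j) x (upd22 ps j l u v u' v') = (if u = v then (\<Sum>p<N. x (upd22 ps j l p p u' v')) else 0)"
    using vv L L' L'' by (simp add: eop_E W4 W2 W1)
  show "eop N n (Suc l) x (upd22 ps j l u v u' v') = (if u' = v' then (\<Sum>p<N. x (upd22 ps j l u v p p)) else 0)"
    using vv L L' L'' by (simp add: eop_E W4 W2 W1)
qed

lemma fun_eq_win3:
  assumes L: "Suc (Suc j) < n"
    and V: "\<And>ps u v w. valid N n ps \<Longrightarrow> u < N \<Longrightarrow> v < N \<Longrightarrow> w < N \<Longrightarrow> f (upd3 ps j u v w) = g (upd3 ps j u v w)"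
    and I: "\<And>ps. \<not> valid N n ps \<Longrightarrow> f ps = g ps"
  shows "f = g"
proof
  fix ps show "f ps = g ps"
  proof (cases "valid N n ps")
    case True
    then show ?thesis using V[OF True, of "ps!j" "ps!Suc j" "ps!Suc (Suc j)"] ops3_ps[OF True L] by simp
  qed (rule I)
qed

lemma fun_eq_win2:
  assumes L: "Suc j < n"
    and V: "\<And>ps u v. valid N n ps \<Longrightarrow> u < N \<Longrightarrow> v < N \<Longrightarrow> f (upd2 ps j u v) = g (upd2 ps j u v)"
    and I: "\<And>ps. \<not> valid N n ps \<Longrightarrow> f ps = g ps"
  shows "f = g"
proof
  fix ps show "f ps = g ps"
  proof (cases "valid N n ps")
    case True
    have "upd2 ps j (ps!j) (ps!Suc j) = ps" by (rule V0) (use True L in \<open>simp add: valid_len\<close>)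
    moreover have "ps!j < N" "ps!Suc j < N" using True L by (simp_all add: valid_nth)
    ultimately show ?thesis using V[OF True, of "ps!j" "ps!Suc j"] by simp
  qed (rule I)
qed

lemma fun_eq_win22:
  assumes L: "Suc j < l" "Suc l < n"
    and V: "\<And>ps u v u' v'. valid N n ps \<Longrightarrow> u < N \<Longrightarrow> v < N \<Longrightarrow> u' < N \<Longrightarrow> v' < N \<Longrightarrow>
        f (upd22 ps j l u v u' v') = g (upd22 ps j l u v u' v')"
    and I: "\<And>ps. \<not> valid N n ps \<Longrightarrow> f ps = g ps"
  shows "f = g"
proof
  fix ps show "f ps = g ps"
  proof (cases "valid N n ps")
    case True
    have "upd22 ps j l (ps!j) (ps!Suc j) (ps!l) (ps!Suc l) = ps" by (rule W0) (use True L in \<open>simp_all add: valid_len\<close>)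
    moreover have "ps!j < N" "ps!Suc j < N" "ps!l < N" "ps!Suc l < N" using True L by (simp_all add: valid_nth)
    ultimately show ?thesis using V[OF True, of "ps!j" "ps!Suc j" "ps!l" "ps!Suc l"] by simp
  qed (rule I)
qed

end


context glm begin

abbreviation "S n i \<equiv> sop N n i"
abbreviation "Ee n i \<equiv> eop N n i"

context fixes x :: "nat list \<Rightarrow> 'm" begin

lemma braid: "Suc (Suc j) < n \<Longrightarrow> S n (Suc j) (S n (Suc (Suc j)) (S n (Suc j) x)) = S n (Suc (Suc j)) (S n (Suc j) (S n (Suc (Suc j)) x))"
  apply (rule fun_eq_win3, assumption+)
   apply (simp add: ops3)
  by (simp add: sop_S eop_E)

lemma r6c: "Suc (Suc j) < n \<Longrightarrow> S n (Suc j) (Ee n (Suc (Suc j)) (Ee n (Suc j) x)) = S n (Suc (Suc j)) (Ee n (Suc j) x)"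
  apply (rule fun_eq_win3, assumption+)
   apply (simp add: ops3)
  by (simp add: sop_S eop_E)

lemma r6d: "Suc (Suc j) < n \<Longrightarrow> Ee n (Suc j) (Ee n (Suc (Suc j)) (S n (Suc j) x)) = Ee n (Suc j) (S n (Suc (Suc j)) x)"
  apply (rule fun_eq_win3, assumption+)
   apply (simp add: ops3)
  by (simp add: sop_S eop_E)

lemma r6e: "Suc (Suc j) < n \<Longrightarrow> Ee n (Suc (Suc j)) (Ee n (Suc j) (S n (Suc (Suc j)) x)) = Ee n (Suc (Suc j)) (S n (Suc j) x)"
  apply (rule fun_eq_win3, assumption+)
   apply (simp add: ops3)
  by (simp add: sop_S eop_E)

lemma r6f: "Suc (Suc j) < n \<Longrightarrow> S n (Suc (Suc j)) (Ee n (Suc j) (Ee n (Suc (Suc j)) x)) = S n (Suc j) (Ee n (Suc (Suc j)) x)"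
  apply (rule fun_eq_win3, assumption+)
   apply (simp add: ops3)
  by (simp add: sop_S eop_E)

lemma r6g: "Suc (Suc j) < n \<Longrightarrow> Ee n (Suc (Suc j)) (Ee n (Suc j) (Ee n (Suc (Suc j)) x)) = Ee n (Suc (Suc j)) x"
  apply (rule fun_eq_win3, assumption+)
   apply (simp add: ops3)
  by (simp add: sop_S eop_E)

lemma r6h: "Suc (Suc j) < n \<Longrightarrow> Ee n (Suc j) (Ee n (Suc (Suc j)) (Ee n (Suc j) x)) = Ee n (Suc j) x"
  apply (rule fun_eq_win3, assumption+)
   apply (simp add: ops3)
  by (simp add: sop_S eop_E)

lemma r6a: "Suc j < n \<Longrightarrow> S n (Suc j) (Ee n (Suc j) x) = Ee n (Suc j) x"
  apply (rule fun_eq_win2, assumption+)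
   apply (simp add: ops2)
  by (simp add: sop_S eop_E)

lemma r6b: "Suc j < n \<Longrightarrow> Ee n (Suc j) (S n (Suc j) x) = Ee n (Suc j) x"
  apply (rule fun_eq_win2, assumption+)
   apply (simp add: ops2)
  by (simp add: sop_S eop_E)

lemma r1: "Suc j < n \<Longrightarrow> x \<in> Tens N n \<Longrightarrow> S n (Suc j) (S n (Suc j) x) = x"
  apply (rule fun_eq_win2, assumption+)
   apply (simp add: ops2)
  by (simp add: sop_S eop_E Tens_def)

lemma r3: "Suc j < n \<Longrightarrow> Ee n (Suc j) (Ee n (Suc j) x) = (\<lambda>ps. smul (of_nat N) (Ee n (Suc j) x ps))"
  apply (rule fun_eq_win2, assumption+)
   apply (simp add: ops2 M.sum_constant_scale)
  by (simp add: sop_S eop_E)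

lemma far_ss: "Suc j < l \<Longrightarrow> Suc l < n \<Longrightarrow> S n (Suc j) (S n (Suc l) x) = S n (Suc l) (S n (Suc j) x)"
  apply (rule fun_eq_win22, assumption+)
   apply (simp add: ops22)
  by (simp add: sop_S eop_E)
lemma far_se: "Suc j < l \<Longrightarrow> Suc l < n \<Longrightarrow> S n (Suc j) (Ee n (Suc l) x) = Ee n (Suc l) (S n (Suc j) x)"
  apply (rule fun_eq_win22, assumption+)
   apply (simp add: ops22)
  by (simp add: sop_S eop_E)
lemma far_es: "Suc j < l \<Longrightarrow> Suc l < n \<Longrightarrow> Ee n (Suc j) (S n (Suc l) x) = S n (Suc l) (Ee n (Suc j) x)"
  apply (rule fun_eq_win22, assumption+)
   apply (simp add: ops22)
  by (simp add: sop_S eop_E)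
lemma far_ee: "Suc j < l \<Longrightarrow> Suc l < n \<Longrightarrow> Ee n (Suc j) (Ee n (Suc l) x) = Ee n (Suc l) (Ee n (Suc j) x)"
  apply (rule fun_eq_win22, assumption+)
   apply (simp add: ops22)
   apply (intro impI, rule sum.swap)
  by (simp add: sop_S eop_E)

end
end


lemma sum_app: "(\<Sum>i\<in>I. f i) ps = (\<Sum>i\<in>I. f i ps)"
  by (induction I rule: infinite_finite_induct) auto

lemma sum_if_const: "(\<Sum>b\<in>I. if P then f b else 0) = (if P then (\<Sum>b\<in>I. f b) else 0)"
  by simp

lemma neg_if0: "- (if P then t else 0) = (if P then - t else (0::'a::group_add))"
  by simp

context
  fixes ps :: "'a list" and j :: nat
  assumes L: "Suc j < length ps"
begin
lemma V4: "(upd2 ps j u v)[j := b] = upd2 ps j b v" "(upd2 ps j u v)[Suc j := b] = upd2 ps j u b"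
  using L by (auto simp: upd2_def list_eq_iff_nth_eq nth_list_update)
end

context glm begin

context fixes x :: "nat list \<Rightarrow> 'm" begin

lemma fa_inv: "\<not> valid N (length A) ps \<Longrightarrow> fa A k a b y ps = 0"
  by (simp add: facact_def)

lemma fa2:
  assumes v: "valid N (length A) ps" and L: "Suc j < length A" and uv: "u < N" "v < N" "a < N" "b < N"
  shows "A ! j = 1 \<Longrightarrow> fa A (Suc j) a b y (upd2 ps j u v) = (if u = a then y (upd2 ps j b v) else 0)"
    "A ! j \<noteq> 1 \<Longrightarrow> fa A (Suc j) a b y (upd2 ps j u v) = (if u = b then - y (upd2 ps j a v) else 0)"
    "A ! Suc j = 1 \<Longrightarrow> fa A (Suc (Suc j)) a b y (upd2 ps j u v) = (if v = a then y (upd2 ps j u b) else 0)"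
    "A ! Suc j \<noteq> 1 \<Longrightarrow> fa A (Suc (Suc j)) a b y (upd2 ps j u v) = (if v = b then - y (upd2 ps j u a) else 0)"
proof -
  have L': "Suc j < length ps" using v L by (simp add: valid_len)
  have vv: "valid N (length A) (upd2 ps j u v)" using U5_2[OF v L] uv by simp
  show "A ! j = 1 \<Longrightarrow> fa A (Suc j) a b y (upd2 ps j u v) = (if u = a then y (upd2 ps j b v) else 0)"
    using vv L' by (simp add: fa_V V2 V4)
  show "A ! j \<noteq> 1 \<Longrightarrow> fa A (Suc j) a b y (upd2 ps j u v) = (if u = b then - y (upd2 ps j a v) else 0)"
    using vv L' by (simp add: fa_W V2 V4)
  show "A ! Suc j = 1 \<Longrightarrow> fa A (Suc (Suc j)) a b y (upd2 ps j u v) = (if v = a then y (upd2 ps j u b) else 0)"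
    using vv L' by (simp add: fa_V V2 V4)
  show "A ! Suc j \<noteq> 1 \<Longrightarrow> fa A (Suc (Suc j)) a b y (upd2 ps j u v) = (if v = b then - y (upd2 ps j u a) else 0)"
    using vv L' by (simp add: fa_W V2 V4)
qed

lemma e2:
  assumes L: "Suc j < length A" and ty: "(A ! j = 1) \<noteq> (A ! Suc j = 1)" and ab: "a < N" "b < N"
  shows "eop N (length A) (Suc j) (fa A (Suc j) a b x + fa A (Suc (Suc j)) a b x) = 0"
proof (rule fun_eq_win2[OF L])
  fix ps u v assume v: "valid N (length A) ps" and uv: "u < N" "v < N"
  show "eop N (length A) (Suc j) (fa A (Suc j) a b x + fa A (Suc (Suc j)) a b x) (upd2 ps j u v) = 0 (upd2 ps j u v)"
    using ty ab uv v L by (cases "A ! j = 1") (simp_all add: ops2 fa2 sum.distrib)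
qed (simp add: eop_E)

lemma e3:
  assumes L: "Suc j < length A" and ty: "(A ! j = 1) \<noteq> (A ! Suc j = 1)" and ab: "a < N" "b < N"
  shows "fa A (Suc j) a b (eop N (length A) (Suc j) x) + fa A (Suc (Suc j)) a b (eop N (length A) (Suc j) x) = 0"
proof (rule fun_eq_win2[OF L])
  fix ps u v assume v: "valid N (length A) ps" and uv: "u < N" "v < N"
  show "(fa A (Suc j) a b (eop N (length A) (Suc j) x) + fa A (Suc (Suc j)) a b (eop N (length A) (Suc j) x)) (upd2 ps j u v) = 0 (upd2 ps j u v)"
    using ty ab uv v L by (cases "A ! j = 1") (auto simp add: ops2 fa2)
qed (simp add: fa_inv)

lemma o1:
  assumes L: "Suc j < length A" and ty: "(A ! j = 1) = (A ! Suc j = 1)"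
  shows "opsys.Om N (fa A) (Suc j) (Suc (Suc j)) x = sop N (length A) (Suc j) x"
proof (rule fun_eq_win2[OF L])
  fix ps u v assume v: "valid N (length A) ps" and uv: "u < N" "v < N"
  show "opsys.Om N (fa A) (Suc j) (Suc (Suc j)) x (upd2 ps j u v) = sop N (length A) (Suc j) x (upd2 ps j u v)"
    unfolding opsys.Om_def[OF opsys]
    using ty uv v L by (cases "A ! j = 1") (simp_all add: ops2 fa2 sum_app sum_if_const neg_if0)
qed (simp add: opsys.Om_def[OF opsys] sum_app fa_inv sop_S)

lemma o2:
  assumes L: "Suc j < length A" and ty: "(A ! j = 1) \<noteq> (A ! Suc j = 1)"
  shows "opsys.Om N (fa A) (Suc j) (Suc (Suc j)) x = - eop N (length A) (Suc j) x"
proof (rule fun_eq_win2[OF L])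
  fix ps u v assume v: "valid N (length A) ps" and uv: "u < N" "v < N"
  show "opsys.Om N (fa A) (Suc j) (Suc (Suc j)) x (upd2 ps j u v) = (- eop N (length A) (Suc j) x) (upd2 ps j u v)"
    unfolding opsys.Om_def[OF opsys]
    using ty uv v L by (cases "A ! j = 1") (simp_all add: ops2 fa2 sum_app sum_negf sum_if_const neg_if0)
qed (simp add: opsys.Om_def[OF opsys] sum_app fa_inv eop_E)


lemma e1:
  assumes L: "Suc j < length A" and k: "k \<le> length A" "k \<noteq> Suc j" "k \<noteq> Suc (Suc j)"
    and B: "length B = length A" "k = 0 \<or> B ! (k - 1) = A ! (k - 1)" and ab: "a < N" "b < N"
  shows "eop N (length A) (Suc j) (fa A k a b x) = fa B k a b (eop N (length A) (Suc j) x)"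
proof (rule ext)
  fix ps
  show "eop N (length A) (Suc j) (fa A k a b x) ps = fa B k a b (eop N (length A) (Suc j) x) ps"
  proof (cases "valid N (length A) ps")
    case False then show ?thesis using B by (simp add: eop_E facact_def)
  next
    case v: True
    have lp: "length ps = length A" using v by (simp add: valid_len)
    show ?thesis
    proof (cases k)
      case 0
      then show ?thesis using v B ab by (simp add: eop_E fa_0 valid_upd act_sum)
    next
      case (Suc l)
      have l: "l \<noteq> j" "l \<noteq> Suc j" "l < length ps" using k Suc lp by auto
      have sw: "\<And>p c. ps[j := p, Suc j := p, l := c] = ps[l := c, j := p, Suc j := p]"
        using l L lp by (auto simp: list_eq_iff_nth_eq nth_list_update)
      have Bl: "B ! l = A ! l" using B Suc by simp
      show ?thesis
      proof (cases "A ! l = 1")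
        case True
        then show ?thesis using v B ab l Bl Suc
          by (cases "ps ! l = a") (simp_all add: eop_E fa_V valid_upd nth_list_update sw)
      next
        case False
        then show ?thesis using v B ab l Bl Suc
          by (cases "ps ! l = b") (simp_all add: eop_E fa_W valid_upd nth_list_update sw sum_negf)
      qed
    qed
  qed
qed

end
end


context glm begin

definition Dop :: "int list \<Rightarrow> (nat list \<Rightarrow> 'm) \<Rightarrow> nat list \<Rightarrow> 'm" where
  "Dop A x = (\<lambda>ps. if valid N (length A) ps then smul (of_nat N / 2) (x ps) else 0)"

abbreviation "Om A \<equiv> opsys.Om N (fa A)"
abbreviation "Ys A \<equiv> opsys.Ys N (fa A)"
abbreviation "GG A \<equiv> opsys.G (fa A) (length A)"

lemma Omega_eq: "Omega N act A k l x = Om A k l x"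
  by (simp add: Omega_def opsys.Om_def[OF opsys] sum_app fun_eq_iff)

lemma glact_eq: "glact N act A a b x = GG A a b x"
  by (simp add: glact_def opsys.G_def[OF opsys] sum_app fun_eq_iff)

lemma Ys_inv: "\<not> valid N (length A) ps \<Longrightarrow> Ys A i x ps = 0"
  by (simp add: opsys.Ys_def[OF opsys] opsys.Om_def[OF opsys] sum_app fa_inv)

lemma yop_eq: "yop N smul act A i x = Ys A i x + Dop A x"
  by (auto simp: yop_def Dop_def opsys.Ys_def[OF opsys] Omega_eq sum_app fun_eq_iff Ys_inv[unfolded opsys.Ys_def[OF opsys] sum_app])

lemma sop_addop: "addop (sop N n i)"
  unfolding addop_def by (simp add: sop_def fun_eq_iff)

lemma eop_addop: "addop (eop N n i)"
  unfolding addop_def by (simp add: eop_def fun_eq_iff sum.distrib)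

lemma Dop_addop: "addop (Dop A)"
  unfolding addop_def by (simp add: Dop_def fun_eq_iff M.scale_right_distrib)

lemma Dop_cmt: "a < N \<Longrightarrow> b < N \<Longrightarrow> cmt (Dop A) (fa A k a b)"
  unfolding cmt_def
proof
  fix x assume ab: "a < N" "b < N"
  show "Dop A (fa A k a b x) = fa A k a b (Dop A x)"
  proof (rule ext)
    fix ps show "Dop A (fa A k a b x) ps = fa A k a b (Dop A x) ps"
    proof (cases k)
      case 0 then show ?thesis using ab by (simp add: Dop_def fa_0 act_smul)
    next
      case (Suc l) then show ?thesis using ab
        by (cases "A ! l = 1") (auto simp: Dop_def fa_V fa_W valid_upd)
    qed
  qed
qed

lemma Tens_sop: "sop N n i x \<in> Tens N n" by (simp add: Tens_def sop_def)
lemma Tens_eop: "eop N n i x \<in> Tens N n" by (simp add: Tens_def eop_def)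
lemma Tens_yop: "yop N smul act A i x \<in> Tens N (length A)" by (simp add: Tens_def yop_def)

lemma smul_sop: "sop N n i (\<lambda>ps. smul c (x ps)) = (\<lambda>ps. smul c (sop N n i x ps))"
  by (simp add: sop_def fun_eq_iff)
lemma smul_eop: "eop N n i (\<lambda>ps. smul c (x ps)) = (\<lambda>ps. smul c (eop N n i x ps))"
  by (simp add: eop_def fun_eq_iff M.scale_sum_right)

lemma smul_fa: "a < N \<Longrightarrow> b < N \<Longrightarrow> fa A k a b (\<lambda>ps. smul c (x ps)) = (\<lambda>ps. smul c (fa A k a b x ps))"
  unfolding facact_def by (auto simp: fun_eq_iff act_smul)

lemma smul_cmt_fa: "a < N \<Longrightarrow> b < N \<Longrightarrow> cmt (\<lambda>x ps. smul c (x ps)) (fa A k a b)"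
  unfolding cmt_def using smul_fa by simp

lemma smul_addop: "addop (\<lambda>x ps. smul c (x ps))"
  unfolding addop_def by (simp add: fun_eq_iff M.scale_right_distrib)

end


context opsys begin

lemma Om_pair1: "Om k m x + Om l m x = (\<Sum>a<N. \<Sum>b<N. E k a b (E m b a x) + E l a b (E m b a x))"
  unfolding Om_def by (simp add: sum.distrib)

lemma Om_pair2:
  assumes "k \<le> n" "l \<le> n" "m \<le> n" "k \<noteq> m" "l \<noteq> m"
  shows "Om k m x + Om l m x = (\<Sum>a<N. \<Sum>b<N. E m b a (E k a b x + E l a b x))"
  unfolding Om_pair1 using assms E_comm E_add
  by (intro sum.cong refl) (simp add: addop_def)

lemma Om_pair3:
  assumes "k \<le> n" "l \<le> n" "m \<le> n" "k \<noteq> m" "k \<noteq> l"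
  shows "Om k l x + Om k m x = (\<Sum>a<N. \<Sum>b<N. E k a b (E l b a x + E m b a x))"
  unfolding Om_def using assms E_add
  by (simp add: sum.distrib addop_def)

end

context glm begin

lemma sg_bij: "Suc (Suc j) \<le> n \<Longrightarrow> k \<le> n \<Longrightarrow> sg j k \<le> n" "sg j (sg j k) = k"
  by (auto simp: sg_def)

lemma hom_y:
  fixes x :: "nat list \<Rightarrow> 'm"
  assumes "i \<le> length A" "a < N" "b < N"
  shows "yop N smul act A i (GG A a b x) = GG A a b (yop N smul act A i x)"
proof -
  interpret O: opsys N "length A" "fa A" by (rule opsys)
  have c1: "cmt (GG A a b) (Ys A i)" using assms by (intro O.cmt_G_Ys) auto
  have c2: "cmt (Dop A) (GG A a b)" using assms by (intro O.cmt_D_G Dop_addop Dop_cmt) auto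
  have ad: "addop (GG A a b)" using assms by (intro O.G_add) auto
  show ?thesis using c1 c2 ad unfolding yop_eq cmt_def addop_def by simp
qed

lemma sop_sum: "sop N n i (\<Sum>k\<in>I. (f k :: nat list \<Rightarrow> 'm)) = (\<Sum>k\<in>I. sop N n i (f k))"
  by (rule addop_sum[OF sop_addop])
lemma eop_sum: "eop N n i (\<Sum>k\<in>I. (f k :: nat list \<Rightarrow> 'm)) = (\<Sum>k\<in>I. eop N n i (f k))"
  by (rule addop_sum[OF eop_addop])

lemma hom_s:
  fixes x :: "nat list \<Rightarrow> 'm"
  assumes j: "Suc j < length A" and ab: "a < N" "b < N"
  shows "sop N (length A) (Suc j) (GG A a b x) = GG (swp A j) a b (sop N (length A) (Suc j) x)"
proof -
  have "sop N (length A) (Suc j) (GG A a b x) = (\<Sum>k\<in>{0..length A}. fa (swp A j) (sg j k) a b (sop N (length A) (Suc j) x))"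
    unfolding opsys.G_def[OF opsys] using j ab by (simp add: sop_sum sop_fa)
  also have "\<dots> = (\<Sum>k\<in>{0..length A}. fa (swp A j) k a b (sop N (length A) (Suc j) x))"
    by (rule sum.reindex_bij_witness[where i="sg j" and j="sg j"]) (use j in \<open>auto simp: sg_def\<close>)
  finally show ?thesis unfolding opsys.G_def[OF opsys] by simp
qed


lemma hom_e:
  fixes x :: "nat list \<Rightarrow> 'm"
  assumes j: "Suc j < length A" and ab: "a < N" "b < N"
    and tyA: "(A ! j = 1) \<noteq> (A ! Suc j = 1)" and tyB: "(B ! j = 1) \<noteq> (B ! Suc j = 1)"
    and lB: "length B = length A" and oth: "\<And>l. l < length A \<Longrightarrow> l \<noteq> j \<Longrightarrow> l \<noteq> Suc j \<Longrightarrow> B ! l = A ! l"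
  shows "eop N (length A) (Suc j) (GG A a b x) = GG B a b (eop N (length A) (Suc j) x)"
proof -
  interpret O: opsys N "length A" "fa A" by (rule opsys)
  interpret P: opsys N "length B" "fa B" by (rule opsys)
  let ?R = "{0..length A} - {Suc j, Suc (Suc j)}"
  have "eop N (length A) (Suc j) (GG A a b x) = eop N (length A) (Suc j) (fa A (Suc j) a b x + fa A (Suc (Suc j)) a b x)
      + (\<Sum>k\<in>?R. eop N (length A) (Suc j) (fa A k a b x))"
    using j by (subst O.G_split[of "Suc j" _ "Suc (Suc j)"]) (auto simp: eop_sum addop_def[THEN iffD1, OF eop_addop])
  also have "eop N (length A) (Suc j) (fa A (Suc j) a b x + fa A (Suc (Suc j)) a b x) = 0"
    by (rule e2[OF j tyA ab])
  also have "(\<Sum>k\<in>?R. eop N (length A) (Suc j) (fa A k a b x)) = (\<Sum>k\<in>?R. fa B k a b (eop N (length A) (Suc j) x))"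
  proof (rule sum.cong[OF refl])
    fix k assume k: "k \<in> ?R"
    show "eop N (length A) (Suc j) (fa A k a b x) = fa B k a b (eop N (length A) (Suc j) x)"
    proof (rule e1[OF j _ _ _ lB _ ab])
      show "k = 0 \<or> B ! (k - 1) = A ! (k - 1)" using k oth by (cases k) auto
    qed (use k in auto)
  qed
  also have "(\<Sum>k\<in>?R. fa B k a b (eop N (length A) (Suc j) x)) = GG B a b (eop N (length A) (Suc j) x)"
  proof -
    have "GG B a b (eop N (length A) (Suc j) x) = (fa B (Suc j) a b (eop N (length A) (Suc j) x) + fa B (Suc (Suc j)) a b (eop N (length A) (Suc j) x))
      + (\<Sum>k\<in>?R. fa B k a b (eop N (length A) (Suc j) x))"
      using j lB by (subst P.G_split[of "Suc j" _ "Suc (Suc j)"]) auto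
    also have "fa B (Suc j) a b (eop N (length A) (Suc j) x) + fa B (Suc (Suc j)) a b (eop N (length A) (Suc j) x) = 0"
      using e3[of j B a b x] j lB tyB ab by simp
    finally show ?thesis by simp
  qed
  finally show ?thesis by simp
qed

end


context glm begin

context fixes x :: "nat list \<Rightarrow> 'm" begin

lemma sg_Suc[simp]: "sg j (Suc j) = Suc (Suc j)" "sg j (Suc (Suc j)) = Suc j"
  by (simp_all add: sg_def)

lemma sop_Om:
  assumes j: "Suc j < length A" and kl: "k \<le> length A" "l \<le> length A"
  shows "sop N (length A) (Suc j) (Om A k l x) = Om (swp A j) (sg j k) (sg j l) (sop N (length A) (Suc j) x)"
proof -
  have sl: "sg j l \<le> length A" using kl j by (auto simp: sg_def)
  show ?thesis
    unfolding opsys.Om_def[OF opsys] using j kl sl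
    by (simp add: sop_sum sop_fa)
qed

lemma sop_Dop: "Suc j < length A \<Longrightarrow> sop N (length A) (Suc j) (Dop A x) = Dop (swp A j) (sop N (length A) (Suc j) x)"
  by (simp add: sop_S Dop_def fun_eq_iff valid_swp)

lemma y2s:
  assumes j: "Suc j < length A" and m: "m \<le> length A" "m \<noteq> Suc j" "m \<noteq> Suc (Suc j)"
  shows "sop N (length A) (Suc j) (yop N smul act A m x) = yop N smul act (swp A j) m (sop N (length A) (Suc j) x)"
proof -
  have sm: "sg j m = m" using m by (simp add: sg_def)
  have "sop N (length A) (Suc j) (Ys A m x) = (\<Sum>k<m. Om (swp A j) (sg j k) m (sop N (length A) (Suc j) x))"
    unfolding opsys.Ys_def[OF opsys] using j m by (simp add: sop_sum sop_Om sm)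
  also have "\<dots> = (\<Sum>k<m. Om (swp A j) k m (sop N (length A) (Suc j) x))"
    by (rule sum.reindex_bij_witness[where i="sg j" and j="sg j"]) (use m in \<open>auto simp: sg_def\<close>)
  also have "\<dots> = Ys (swp A j) m (sop N (length A) (Suc j) x)"
    unfolding opsys.Ys_def[OF opsys] by simp
  finally show ?thesis unfolding yop_eq using j
    by (simp add: addop_def[THEN iffD1, OF sop_addop] sop_Dop)
qed

lemma Ys_Suc: "Ys A (Suc m) y = (\<Sum>k<m. Om A k (Suc m) y) + Om A m (Suc m) y"
  unfolding opsys.Ys_def[OF opsys] by simp

lemma y7a:
  assumes j: "Suc j < length A"
  shows "sop N (length A) (Suc j) (yop N smul act A (Suc j) x) =
    yop N smul act (swp A j) (Suc (Suc j)) (sop N (length A) (Suc j) x) - Om (swp A j) (Suc j) (Suc (Suc j)) (sop N (length A) (Suc j) x)"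
proof -
  have "sop N (length A) (Suc j) (Ys A (Suc j) x) = (\<Sum>k<Suc j. Om (swp A j) (sg j k) (Suc (Suc j)) (sop N (length A) (Suc j) x))"
    unfolding opsys.Ys_def[OF opsys] using j by (simp add: sop_sum sop_Om del: sum.lessThan_Suc)
  also have "\<dots> = (\<Sum>k<Suc j. Om (swp A j) k (Suc (Suc j)) (sop N (length A) (Suc j) x))"
    by (intro sum.cong refl) (simp add: sg_def)
  finally have "sop N (length A) (Suc j) (Ys A (Suc j) x) = Ys (swp A j) (Suc (Suc j)) (sop N (length A) (Suc j) x) - Om (swp A j) (Suc j) (Suc (Suc j)) (sop N (length A) (Suc j) x)"
    by (simp add: Ys_Suc[of _ "Suc j"])
  then show ?thesis unfolding yop_eq using j
    by (simp add: addop_def[THEN iffD1, OF sop_addop] sop_Dop algebra_simps)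
qed

lemma y7b:
  assumes j: "Suc j < length A"
  shows "sop N (length A) (Suc j) (yop N smul act A (Suc (Suc j)) x) =
    yop N smul act (swp A j) (Suc j) (sop N (length A) (Suc j) x) + Om (swp A j) (Suc j) (Suc (Suc j)) (sop N (length A) (Suc j) x)"
proof -
  interpret P: opsys N "length (swp A j)" "fa (swp A j)" by (rule opsys)
  have "sop N (length A) (Suc j) (Ys A (Suc (Suc j)) x) = (\<Sum>k<Suc j. Om (swp A j) (sg j k) (Suc j) (sop N (length A) (Suc j) x))
     + Om (swp A j) (Suc (Suc j)) (Suc j) (sop N (length A) (Suc j) x)"
    unfolding Ys_Suc using j by (simp add: sop_sum sop_Om sg_def addop_def[THEN iffD1, OF sop_addop] del: sum.lessThan_Suc)
  also have "(\<Sum>k<Suc j. Om (swp A j) (sg j k) (Suc j) (sop N (length A) (Suc j) x)) = Ys (swp A j) (Suc j) (sop N (length A) (Suc j) x)"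
    unfolding opsys.Ys_def[OF opsys] by (intro sum.cong refl) (simp add: sg_def del: sum.lessThan_Suc)
  also have "Om (swp A j) (Suc (Suc j)) (Suc j) (sop N (length A) (Suc j) x) = Om (swp A j) (Suc j) (Suc (Suc j)) (sop N (length A) (Suc j) x)"
    using j by (intro P.Om_sym) auto
  finally show ?thesis unfolding yop_eq using j
    by (simp add: addop_def[THEN iffD1, OF sop_addop] sop_Dop algebra_simps fun_eq_iff)
qed


lemma eop_Dop: "eop N (length A) (Suc j) (Dop A x) = Dop B (eop N (length A) (Suc j) x)" if "length B = length A"
  using that by (simp add: eop_E Dop_def fun_eq_iff valid_upd M.scale_sum_right)

lemma eop_Om_far:
  assumes j: "Suc j < length A" and km: "k \<le> length A" "m \<le> length A" "k \<noteq> Suc j" "k \<noteq> Suc (Suc j)" "m \<noteq> Suc j" "m \<noteq> Suc (Suc j)"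
    and lB: "length B = length A" and oth: "\<And>l. l < length A \<Longrightarrow> l \<noteq> j \<Longrightarrow> l \<noteq> Suc j \<Longrightarrow> B ! l = A ! l"
  shows "eop N (length A) (Suc j) (Om A k m x) = Om B k m (eop N (length A) (Suc j) x)"
proof -
  have tk: "k = 0 \<or> B ! (k - 1) = A ! (k - 1)" using km oth by (cases k) auto
  have tm: "m = 0 \<or> B ! (m - 1) = A ! (m - 1)" using km oth by (cases m) auto
  show ?thesis unfolding opsys.Om_def[OF opsys]
    by (simp add: eop_sum e1[OF j km(1,3,4) lB tk] e1[OF j km(2,5,6) lB tm])
qed

lemma y5e:
  assumes j: "Suc j < length A" and m: "m \<le> length A" "m \<noteq> Suc j" "m \<noteq> Suc (Suc j)"
    and tyA: "(A ! j = 1) \<noteq> (A ! Suc j = 1)" and tyB: "(B ! j = 1) \<noteq> (B ! Suc j = 1)"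
    and lB: "length B = length A" and oth: "\<And>l. l < length A \<Longrightarrow> l \<noteq> j \<Longrightarrow> l \<noteq> Suc j \<Longrightarrow> B ! l = A ! l"
  shows "eop N (length A) (Suc j) (yop N smul act A m x) = yop N smul act B m (eop N (length A) (Suc j) x)"
proof -
  interpret O: opsys N "length A" "fa A" by (rule opsys)
  interpret P: opsys N "length B" "fa B" by (rule opsys)
  let ?e = "eop N (length A) (Suc j)"
  have "?e (Ys A m x) = Ys B m (?e x)"
  proof (cases "m \<le> j")
    case True
    show ?thesis unfolding opsys.Ys_def[OF opsys] eop_sum
      by (intro sum.cong refl eop_Om_far[OF j _ _ _ _ _ _ lB oth]) (use True m in auto)
  next
    case False
    then have mg: "Suc (Suc j) < m" using m by auto
    let ?R = "{..<m} - {Suc j, Suc (Suc j)}"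
    have split: "\<And>F. (\<Sum>k<m. F k) = (F (Suc j) + F (Suc (Suc j))) + (\<Sum>k\<in>?R. F k :: nat list \<Rightarrow> 'm)"
    proof -
      fix F :: "nat \<Rightarrow> nat list \<Rightarrow> 'm"
      have "{..<m} = {Suc j, Suc (Suc j)} \<union> ?R" using mg by auto
      then have "(\<Sum>k<m. F k) = (\<Sum>k\<in>{Suc j, Suc (Suc j)} \<union> ?R. F k)" by simp
      also have "\<dots> = (\<Sum>k\<in>{Suc j, Suc (Suc j)}. F k) + (\<Sum>k\<in>?R. F k)"
        by (rule sum.union_disjoint) auto
      finally show "(\<Sum>k<m. F k) = (F (Suc j) + F (Suc (Suc j))) + (\<Sum>k\<in>?R. F k)" by simp
    qed
    have p1: "?e (Om A (Suc j) m x + Om A (Suc (Suc j)) m x) = 0"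
    proof -
      have "?e (Om A (Suc j) m x + Om A (Suc (Suc j)) m x) =
        (\<Sum>a<N. \<Sum>b<N. ?e (fa A (Suc j) a b (fa A m b a x) + fa A (Suc (Suc j)) a b (fa A m b a x)))"
        unfolding O.Om_pair1 by (simp add: eop_sum)
      also have "\<dots> = 0" using e2[OF j tyA] by simp
      finally show ?thesis .
    qed
    have p2: "Om B (Suc j) m (?e x) + Om B (Suc (Suc j)) m (?e x) = 0"
    proof -
      have "Om B (Suc j) m (?e x) + Om B (Suc (Suc j)) m (?e x) =
        (\<Sum>a<N. \<Sum>b<N. fa B m b a (fa B (Suc j) a b (?e x) + fa B (Suc (Suc j)) a b (?e x)))"
        using mg m lB by (intro P.Om_pair2) auto
      also have "\<dots> = 0" using e3[OF j[folded lB] tyB] lB by (simp add: addop_zero[OF fa_add])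
      finally show ?thesis .
    qed
    show ?thesis unfolding opsys.Ys_def[OF opsys] split
      using p1 p2 m mg
      by (simp add: addop_def[THEN iffD1, OF eop_addop] eop_sum eop_Om_far[OF j _ _ _ _ _ _ lB oth])
  qed
  then show ?thesis unfolding yop_eq
    by (simp add: addop_def[THEN iffD1, OF eop_addop] eop_Dop[OF lB])
qed


lemma Dop2: "Dop A y + Dop A y = (\<lambda>ps. if valid N (length A) ps then smul (of_nat N) (y ps) else 0)"
proof -
  have "\<And>m. smul (of_nat N / 2) m + smul (of_nat N / 2) m = smul (of_nat N) m"
    by (simp flip: M.scale_left_distrib)
  then show ?thesis by (simp add: Dop_def fun_eq_iff)
qed

lemma eop_scaleN: "eop N (length A) (Suc j) (\<lambda>ps. if valid N (length A) ps then smul c (x ps) else 0) = (\<lambda>ps. smul c (eop N (length A) (Suc j) x ps))"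
  by (simp add: eop_E fun_eq_iff valid_upd M.scale_sum_right)

lemma Ys_pairsum: "Ys A (Suc j) y + Ys A (Suc (Suc j)) y = (\<Sum>k<Suc j. Om A k (Suc j) y + Om A k (Suc (Suc j)) y) + Om A (Suc j) (Suc (Suc j)) y"
  unfolding opsys.Ys_def[OF opsys]
  by (simp only: sum.lessThan_Suc[of _ "Suc j"] sum.distrib add.assoc)

lemma y8a:
  assumes j: "Suc j < length A" and tyA: "(A ! j = 1) \<noteq> (A ! Suc j = 1)"
  shows "eop N (length A) (Suc j) (yop N smul act A (Suc j) x + yop N smul act A (Suc (Suc j)) x) = 0"
proof -
  interpret O: opsys N "length A" "fa A" by (rule opsys)
  let ?e = "eop N (length A) (Suc j)"
  have p: "?e (Om A k (Suc j) x + Om A k (Suc (Suc j)) x) = 0" if k: "k < Suc j" for k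
  proof -
    have "?e (Om A k (Suc j) x + Om A k (Suc (Suc j)) x) =
       (\<Sum>a<N. \<Sum>b<N. ?e (fa A k a b (fa A (Suc j) b a x + fa A (Suc (Suc j)) b a x)))"
      using k j by (subst O.Om_pair3) (auto simp: eop_sum)
    also have "\<dots> = (\<Sum>a<N. \<Sum>b<N. fa A k a b (?e (fa A (Suc j) b a x + fa A (Suc (Suc j)) b a x)))"
      using k j by (intro sum.cong refl e1) auto
    also have "\<dots> = 0" using e2[OF j tyA] by (simp add: addop_zero[OF fa_add])
    finally show ?thesis .
  qed
  have o: "?e (Om A (Suc j) (Suc (Suc j)) x) = - (\<lambda>ps. smul (of_nat N) (?e x ps))"
    using o2[OF j tyA] r3[OF j] by (simp add: addop_minus[OF eop_addop])
  have "yop N smul act A (Suc j) x + yop N smul act A (Suc (Suc j)) x =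
     (\<Sum>k<Suc j. Om A k (Suc j) x + Om A k (Suc (Suc j)) x) + Om A (Suc j) (Suc (Suc j)) x + (Dop A x + Dop A x)"
    unfolding yop_eq Ys_pairsum[symmetric] by (simp add: algebra_simps)
  then show ?thesis using p o
    by (simp add: addop_def[THEN iffD1, OF eop_addop] eop_sum Dop2 eop_scaleN)
qed

lemma y8b:
  assumes j: "Suc j < length B" and tyB: "(B ! j = 1) \<noteq> (B ! Suc j = 1)"
  shows "yop N smul act B (Suc j) (eop N (length B) (Suc j) x) + yop N smul act B (Suc (Suc j)) (eop N (length B) (Suc j) x) = 0"
proof -
  interpret P: opsys N "length B" "fa B" by (rule opsys)
  let ?e = "eop N (length B) (Suc j)"
  have p: "Om B k (Suc j) (?e x) + Om B k (Suc (Suc j)) (?e x) = 0" if k: "k < Suc j" for k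
  proof -
    have "Om B k (Suc j) (?e x) + Om B k (Suc (Suc j)) (?e x) =
       (\<Sum>a<N. \<Sum>b<N. fa B k a b (fa B (Suc j) b a (?e x) + fa B (Suc (Suc j)) b a (?e x)))"
      using k j by (subst P.Om_pair3) auto
    also have "\<dots> = 0" using e3[OF j tyB] by (simp add: addop_zero[OF fa_add])
    finally show ?thesis .
  qed
  have o: "Om B (Suc j) (Suc (Suc j)) (?e x) = - (\<lambda>ps. smul (of_nat N) (?e x ps))"
    using o2[OF j tyB, of "?e x"] r3[OF j] by simp
  have d: "Dop B (?e x) + Dop B (?e x) = (\<lambda>ps. smul (of_nat N) (?e x ps))"
    unfolding Dop2 by (simp add: fun_eq_iff eop_E)
  have "yop N smul act B (Suc j) (?e x) + yop N smul act B (Suc (Suc j)) (?e x) =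
     (\<Sum>k<Suc j. Om B k (Suc j) (?e x) + Om B k (Suc (Suc j)) (?e x)) + Om B (Suc j) (Suc (Suc j)) (?e x) + (Dop B (?e x) + Dop B (?e x))"
    unfolding yop_eq Ys_pairsum[symmetric] by (simp add: algebra_simps)
  then show ?thesis using p o d by simp
qed

lemma yy:
  assumes "i \<le> length A" "k \<le> length A"
  shows "yop N smul act A i (yop N smul act A k x) = yop N smul act A k (yop N smul act A i x)"
proof -
  interpret O: opsys N "length A" "fa A" by (rule opsys)
  have c1: "cmt (Ys A i) (Ys A k)" using assms by (intro O.cmt_Ys_Ys)
  have c2: "cmt (Dop A) (Ys A i)" "cmt (Dop A) (Ys A k)" using assms
    by (intro O.cmt_D_Ys Dop_addop Dop_cmt; simp)+
  have a: "addop (Ys A i)" "addop (Ys A k)" "addop (Dop A)" using assms by (auto intro: O.Ys_add Dop_addop)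
  show ?thesis using c1 c2 a unfolding yop_eq cmt_def addop_def by (simp add: algebra_simps)
qed

lemma yop_add: "i \<le> length A \<Longrightarrow> yop N smul act A i (y + z) = yop N smul act A i y + yop N smul act A i z"
proof -
  assume i: "i \<le> length A"
  interpret O: opsys N "length A" "fa A" by (rule opsys)
  have a: "addop (Ys A i)" "addop (Dop A)" using i by (auto intro: O.Ys_add Dop_addop)
  then show ?thesis unfolding yop_eq addop_def by (simp add: algebra_simps)
qed

lemma yop_smul: "i \<le> length A \<Longrightarrow> yop N smul act A i (\<lambda>ps. smul c (y ps)) = (\<lambda>ps. smul c (yop N smul act A i y ps))"
proof -
  assume i: "i \<le> length A"
  interpret O: opsys N "length A" "fa A" by (rule opsys)
  have "cmt (\<lambda>x ps. smul c (x ps)) (Ys A i)"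
    using i by (intro O.cmt_D_Ys smul_addop smul_cmt_fa)
  then have h: "Ys A i (\<lambda>ps. smul c (y ps)) = (\<lambda>ps. smul c (Ys A i y ps))"
    unfolding cmt_def by metis
  moreover have "Dop A (\<lambda>ps. smul c (y ps)) = (\<lambda>ps. smul c (Dop A y ps))"
    by (simp add: Dop_def fun_eq_iff mult_ac)
  ultimately show ?thesis unfolding yop_eq by (simp add: M.scale_right_distrib fun_eq_iff)
qed

end
end


locale hwm = glm N smul act for N smul and act :: "nat \<Rightarrow> nat \<Rightarrow> 'm::ab_group_add \<Rightarrow> 'm" +
  fixes v0 :: 'm and lam :: "nat \<Rightarrow> complex"
  assumes hv: "\<And>i. i < N \<Longrightarrow> act i i v0 = smul (lam i) v0"
    and hup: "\<And>i j. i < N \<Longrightarrow> j < N \<Longrightarrow> i < j \<Longrightarrow> act i j v0 = 0"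
    and hgen: "\<And>S. M.subspace S \<Longrightarrow> v0 \<in> S \<Longrightarrow> (\<And>i j x. i < N \<Longrightarrow> j < N \<Longrightarrow> x \<in> S \<Longrightarrow> act i j x \<in> S) \<Longrightarrow> S = UNIV"
begin

inductive_set Sg :: "'m set" where
  Sv: "v0 \<in> Sg"
| Sz: "0 \<in> Sg"
| Sa: "x \<in> Sg \<Longrightarrow> y \<in> Sg \<Longrightarrow> x + y \<in> Sg"
| Ss: "x \<in> Sg \<Longrightarrow> smul c x \<in> Sg"
| Sl: "x \<in> Sg \<Longrightarrow> b < a \<Longrightarrow> a < N \<Longrightarrow> act a b x \<in> Sg"

lemma Sg_diff: "x \<in> Sg \<Longrightarrow> y \<in> Sg \<Longrightarrow> x - y \<in> Sg"
proof -
  assume "x \<in> Sg" "y \<in> Sg"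
  then have "x + smul (-1) y \<in> Sg" by (intro Sa Ss)
  then show ?thesis by simp
qed

lemma Sg_if: "x \<in> Sg \<Longrightarrow> (if P then x else 0) \<in> Sg"
  by (simp add: Sz)

lemma act_brk': "i < N \<Longrightarrow> j < N \<Longrightarrow> a < N \<Longrightarrow> b < N \<Longrightarrow>
  act i j (act a b y) = act a b (act i j y) + (if j = a then act i b y else 0) - (if b = i then act a j y else 0)"
  using act_brk[of i j a b y] by (simp add: algebra_simps)

lemma Sg_stable: "x \<in> Sg \<Longrightarrow> i < N \<Longrightarrow> j < N \<Longrightarrow> act i j x \<in> Sg"
proof (induction x arbitrary: i j rule: Sg.induct)
  case Sv
  show ?case
  proof (cases i j rule: linorder_cases)
    case less then show ?thesis using Sv hup by (simp add: Sz)
  next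
    case equal then show ?thesis using Sv hv by (simp add: Ss Sg.Sv)
  next
    case greater then show ?thesis using Sv by (intro Sl Sg.Sv)
  qed
next
  case Sz then show ?case by (simp add: Sg.Sz)
next
  case (Sa x y) then show ?case by (simp add: act_add Sg.Sa)
next
  case (Ss x c) then show ?case by (simp add: act_smul Sg.Ss)
next
  case (Sl x b a)
  have "act i j (act a b x) = act a b (act i j x) + (if j = a then act i b x else 0) - (if b = i then act a j x else 0)"
    using Sl by (intro act_brk') auto
  moreover have "act a b (act i j x) \<in> Sg"
  proof -
    have "act i j x \<in> Sg" using Sl by blast
    then show ?thesis by (rule Sg.Sl) (use Sl in auto)
  qed
  moreover have "(if j = a then act i b x else 0) \<in> Sg" using Sl by (intro Sg_if) auto
  moreover have "(if b = i then act a j x else 0) \<in> Sg" using Sl by (intro Sg_if) auto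
  ultimately show ?case by (simp add: Sg_diff Sg.Sa)
qed

lemma Sg_UNIV: "Sg = UNIV"
proof (rule hgen)
  show "M.subspace Sg" unfolding M.subspace_def by (auto intro: Sz Sa Ss)
qed (auto intro: Sv Sg_stable)

definition h :: "'m \<Rightarrow> 'm" where "h x = (\<Sum>i<N. smul (of_nat i) (act i i x))"
definition mu :: complex where "mu = (\<Sum>i<N. of_nat i * lam i)"

lemma h_add: "h (x + y) = h x + h y"
  by (simp add: h_def act_add M.scale_right_distrib sum.distrib)

lemma h_smul: "h (smul c x) = smul c (h x)"
  by (simp add: h_def act_smul M.scale_sum_right mult_ac)

lemma h_addop: "addop h" by (simp add: addop_def h_add)

lemma h_diff: "h (x - y) = h x - h y"
  by (rule addop_diff[OF h_addop])

lemma h_v0: "h v0 = smul mu v0"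
  by (simp add: h_def hv mu_def M.scale_sum_left)

lemma h_low:
  assumes ab: "b < a" "a < N"
  shows "h (act a b w) = act a b (h w) + smul (of_nat a - of_nat b) (act a b w)"
proof -
  have bN: "b < N" using ab by simp
  have e: "smul (of_nat i) (act i i (act a b w)) = smul (of_nat i) (act a b (act i i w)) + (if i = a then smul (of_nat i) (act i b w) else 0)
      - (if b = i then smul (of_nat i) (act a i w) else 0)" if "i < N" for i
    using that ab bN by (subst act_brk') (simp_all add: M.scale_right_distrib M.scale_right_diff_distrib)
  have "h (act a b w) = (\<Sum>i<N. smul (of_nat i) (act a b (act i i w)) + (if i = a then smul (of_nat i) (act i b w) else 0)
      - (if b = i then smul (of_nat i) (act a i w) else 0))"
    unfolding h_def by (rule sum.cong[OF refl]) (simp add: e)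
  also have "\<dots> = (\<Sum>i<N. smul (of_nat i) (act a b (act i i w))) + (\<Sum>i<N. (if i = a then smul (of_nat i) (act i b w) else 0))
      - (\<Sum>i<N. (if b = i then smul (of_nat i) (act a i w) else 0))"
    by (simp only: sum.distrib sum_subtractf)
  also have "(\<Sum>i<N. (if i = a then smul (of_nat i) (act i b w) else 0)) = smul (of_nat a) (act a b w)"
    using ab by simp
  also have "(\<Sum>i<N. (if b = i then smul (of_nat i) (act a i w) else 0)) = smul (of_nat b) (act a b w)"
    using bN by simp
  also have "(\<Sum>i<N. smul (of_nat i) (act a b (act i i w))) = act a b (h w)"
    unfolding h_def using ab bN by (simp add: act_sum act_smul)
  finally show ?thesis by (simp add: M.scale_left_diff_distrib)
qed

definition eig :: "(nat \<times> 'm) list \<Rightarrow> bool" where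
  "eig L \<longleftrightarrow> (\<forall>p\<in>set L. 1 \<le> fst p \<and> h (snd p) = smul (mu + of_nat (fst p)) (snd p))"

definition Pw :: "'m \<Rightarrow> bool" where
  "Pw x \<longleftrightarrow> (\<exists>c L. x = smul c v0 + sum_list (map snd L) \<and> eig L)"

lemma act_sum_list: "a < N \<Longrightarrow> b < N \<Longrightarrow> act a b (sum_list xs) = sum_list (map (act a b) xs)"
  by (induction xs) (auto simp: act_add)

lemma smul_sum_list: "smul c (sum_list xs) = sum_list (map (smul c) xs)"
  by (induction xs) (auto simp: M.scale_right_distrib)

lemma Pw_Sg: "x \<in> Sg \<Longrightarrow> Pw x"
proof (induction x rule: Sg.induct)
  case Sv
  show ?case unfolding Pw_def eig_def by (rule exI[of _ 1], rule exI[of _ "[]"]) simp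
next
  case Sz
  show ?case unfolding Pw_def eig_def by (rule exI[of _ 0], rule exI[of _ "[]"]) simp
next
  case (Sa x y)
  then obtain c1 L1 c2 L2 where "x = smul c1 v0 + sum_list (map snd L1)" "eig L1"
     "y = smul c2 v0 + sum_list (map snd L2)" "eig L2" unfolding Pw_def by blast
  then show ?case unfolding Pw_def
    by (intro exI[of _ "c1 + c2"] exI[of _ "L1 @ L2"]) (auto simp: eig_def M.scale_left_distrib algebra_simps)
next
  case (Ss x c)
  then obtain c1 L1 where x: "x = smul c1 v0 + sum_list (map snd L1)" "eig L1" unfolding Pw_def by blast
  let ?L = "map (\<lambda>p. (fst p, smul c (snd p))) L1"
  have "eig ?L" using x(2) unfolding eig_def by (auto simp: h_smul mult_ac)
  moreover have "smul c x = smul (c * c1) v0 + sum_list (map snd ?L)"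
    using x(1) by (simp add: M.scale_right_distrib smul_sum_list comp_def)
  ultimately show ?case unfolding Pw_def by blast
next
  case (Sl x b a)
  then obtain c1 L1 where x: "x = smul c1 v0 + sum_list (map snd L1)" "eig L1" unfolding Pw_def by blast
  let ?L = "(a - b, smul c1 (act a b v0)) # map (\<lambda>p. (fst p + (a - b), act a b (snd p))) L1"
  have ba: "b < N" using Sl by simp
  have e: "h (act a b w) = smul (\<nu> + of_nat (a - b)) (act a b w)" if "h w = smul \<nu> w" for w \<nu>
    using h_low[OF Sl(2,3), of w] that Sl(2,3) by (simp add: act_smul M.scale_left_distrib of_nat_diff)
  have "eig ?L" using x(2) Sl(2) unfolding eig_def
    by (auto simp: h_smul e[OF h_v0] e add.assoc mult_ac add_diff_eq)
  moreover have "act a b x = smul 0 v0 + sum_list (map snd ?L)"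
    using x(1) Sl ba by (simp add: act_add act_smul act_sum_list comp_def)
  ultimately show ?case unfolding Pw_def by blast
qed


lemma h_sum_list: "h (sum_list xs) = sum_list (map h xs)"
  by (induction xs) (auto simp: h_add addop_zero[OF h_addop])

lemma key_sum:
  assumes "\<forall>p\<in>set L. 1 \<le> fst p \<and> fst p \<le> Suc D \<and> h (snd p) = smul (mu + of_nat (fst p)) (snd p)"
  shows "h (sum_list (map snd L)) - smul (mu + of_nat (Suc D)) (sum_list (map snd L)) =
    sum_list (map (\<lambda>p. smul (of_nat (fst p) - of_nat (Suc D)) (snd p)) (filter (\<lambda>p. fst p \<le> D) L))"
  using assms
proof (induction L)
  case Nil then show ?case by (simp add: addop_zero[OF h_addop])
next
  case (Cons p L)
  have IH: "h (sum_list (map snd L)) - smul (mu + of_nat (Suc D)) (sum_list (map snd L)) =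
    sum_list (map (\<lambda>p. smul (of_nat (fst p) - of_nat (Suc D)) (snd p)) (filter (\<lambda>p. fst p \<le> D) L))"
    using Cons by simp
  have p: "h (snd p) = smul (mu + of_nat (fst p)) (snd p)" "fst p \<le> Suc D" using Cons.prems by auto
  have "h (snd p) - smul (mu + of_nat (Suc D)) (snd p) = smul (of_nat (fst p) - of_nat (Suc D)) (snd p)"
    using p by (simp add: M.scale_left_diff_distrib[symmetric] algebra_simps)
  moreover have "\<not> fst p \<le> D \<Longrightarrow> smul (of_nat (fst p) - of_nat (Suc D)) (snd p) = 0"
    using p(2) by (simp add: le_Suc_eq)
  ultimately show ?case using IH
    by (auto simp: h_add M.scale_right_distrib algebra_simps)
qed

lemma key:
  "\<forall>p\<in>set L. 1 \<le> fst p \<and> fst p \<le> D \<and> h (snd p) = smul (mu + of_nat (fst p)) (snd p) \<Longrightarrow>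
   w = sum_list (map snd L) \<Longrightarrow> h w = smul mu w \<Longrightarrow> w = 0"
proof (induction D arbitrary: L w)
  case 0
  then have "L = []" by (cases L) auto
  then show ?case using 0 by simp
next
  case (Suc D)
  let ?D = "of_nat (Suc D) :: complex"
  let ?L = "map (\<lambda>p. (fst p, smul ((of_nat (fst p) - ?D) / (- ?D)) (snd p))) (filter (\<lambda>p. fst p \<le> D) L)"
  have ks: "h w - smul (mu + ?D) w = sum_list (map (\<lambda>p. smul (of_nat (fst p) - ?D) (snd p)) (filter (\<lambda>p. fst p \<le> D) L))"
    using key_sum[of L D] Suc.prems by simp
  have "h w - smul (mu + ?D) w = smul (- ?D) w"
    using Suc.prems(3) by (simp add: M.scale_left_diff_distrib[symmetric] algebra_simps)
  then have "smul (- ?D) w = sum_list (map (\<lambda>p. smul (of_nat (fst p) - ?D) (snd p)) (filter (\<lambda>p. fst p \<le> D) L))"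
    using ks by simp
  then have "smul (1 / (- ?D)) (smul (- ?D) w) = smul (1 / (- ?D)) (sum_list (map (\<lambda>p. smul (of_nat (fst p) - ?D) (snd p)) (filter (\<lambda>p. fst p \<le> D) L)))"
    by simp
  moreover have "(- 1 :: complex) \<noteq> of_nat D"
  proof
    assume "(- 1 :: complex) = of_nat D"
    then have "of_nat (Suc D) = (0::complex)" by (metis add.right_inverse of_nat_Suc add.commute)
    then show False by (simp only: of_nat_eq_0_iff)
  qed
  ultimately have wL: "w = sum_list (map snd ?L)"
    by (simp add: smul_sum_list comp_def)
  have "\<forall>p\<in>set ?L. 1 \<le> fst p \<and> fst p \<le> D \<and> h (snd p) = smul (mu + of_nat (fst p)) (snd p)"
    using Suc.prems(1) by (auto simp: h_smul mult_ac)
  then show ?case using Suc.IH wL Suc.prems(3) by blast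
qed

lemma hw_weight:
  assumes w: "\<And>i. i < N \<Longrightarrow> act i i w = smul (lam i) w"
  shows "\<exists>c. w = smul c v0"
proof -
  have "Pw w" using Pw_Sg Sg_UNIV by auto
  then obtain c L where cL: "w = smul c v0 + sum_list (map snd L)" "eig L" unfolding Pw_def by blast
  have hw: "h w = smul mu w" using w by (simp add: h_def mu_def M.scale_sum_left)
  let ?w = "w - smul c v0"
  have "h ?w = smul mu ?w"
    using hw by (simp add: h_diff h_smul h_v0 M.scale_right_diff_distrib mult_ac)
  moreover have "?w = sum_list (map snd L)" using cL by simp
  moreover obtain D where "\<forall>p\<in>set L. fst p \<le> D"
    using finite_set[of L] by (metis finite_imageI finite_nat_set_iff_bounded_le image_eqI)
  ultimately have "?w = 0" using cL(2) unfolding eig_def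
    by (intro key[of L D]) auto
  then show ?thesis by auto
qed

end


context glm begin

abbreviation "A2 \<equiv> [1, -1] :: int list"
abbreviation "Y2 \<equiv> yop N smul act A2 1"

definition x0 :: "'m \<Rightarrow> nat list \<Rightarrow> 'm" where
  "x0 m = (\<lambda>ps. if valid N 2 ps \<and> ps ! 0 = ps ! 1 then m else 0)"

definition ev :: "(nat list \<Rightarrow> 'm) \<Rightarrow> 'm" where
  "ev X = (\<Sum>i<N. X [i, i])"

lemma oc_eq: "omega_comp N smul act k m = ev ((Y2 ^^ k) (x0 m))"
  by (simp add: omega_comp_def x0_def ev_def)

lemma valid2: "valid N 2 [a, b] \<longleftrightarrow> a < N \<and> b < N"
  by (auto simp: valid_def numeral_2_eq_2)

lemma valid2': "valid N (Suc (Suc 0)) [a, b] \<longleftrightarrow> a < N \<and> b < N"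
  by (auto simp: valid_def)

lemma sum02: "(\<Sum>k\<in>{0..Suc (Suc 0)}. f k) = f 0 + f (Suc 0) + f (Suc (Suc 0))"
  by (simp add: atLeast0_atMost_Suc add_ac)

lemma valid2_cases: "valid N 2 ps \<Longrightarrow> \<exists>a b. ps = [a, b] \<and> a < N \<and> b < N"
  unfolding valid_def numeral_2_eq_2
  by (cases ps; cases "tl ps") auto

lemma x0_eop: "x0 m = eop N 2 1 (\<lambda>ps. if ps = [0, 0] then m else 0)"
proof (rule ext)
  fix ps show "x0 m ps = eop N 2 1 (\<lambda>ps. if ps = [0, 0] then m else 0) ps"
  proof (cases "valid N 2 ps")
    case True
    then obtain a b where ab: "ps = [a, b]" "a < N" "b < N" using valid2_cases by blast
    then have "0 < N" by simp
    then show ?thesis using ab by (simp add: x0_def eop_def valid2)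
  qed (simp add: x0_def eop_def)
qed

lemma G_x0:
  assumes ab: "a < N" "b < N"
  shows "GG A2 a b (x0 m) = x0 (act a b m)"
proof -
  interpret O: opsys N "length A2" "fa A2" by (rule opsys)
  have "GG A2 a b (x0 m) = (fa A2 1 a b (x0 m) + fa A2 2 a b (x0 m)) + (\<Sum>k\<in>{0..length A2} - {1, 2}. fa A2 k a b (x0 m))"
    by (rule O.G_split) auto
  also have "fa A2 1 a b (x0 m) + fa A2 2 a b (x0 m) = 0"
    using e3[of 0 A2 a b "\<lambda>ps. if ps = [0, 0] then m else 0"] ab by (simp add: x0_eop numeral_2_eq_2)
  also have "{0..length A2} - {1, 2} = {0::nat}" by auto
  finally have "GG A2 a b (x0 m) = fa A2 0 a b (x0 m)" by simp
  also have "fa A2 0 a b (x0 m) = x0 (act a b m)"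
    using ab by (simp add: fun_eq_iff fa_0 x0_def numeral_2_eq_2)
  finally show ?thesis .
qed

lemma ev_G:
  assumes ab: "a < N" "b < N"
  shows "ev (GG A2 a b X) = act a b (ev X)"
proof -
  have "GG A2 a b X [i, i] = act a b (X [i, i]) + (if i = a then X [b, i] else 0) - (if i = b then X [i, a] else 0)" if "i < N" for i
    unfolding opsys.G_def[OF opsys] using that ab
    by (simp add: sum_app numeral_2_eq_2 sum02 fa_0 fa_V[of _ 0] fa_W[of _ "Suc 0"] valid2')
  then have "ev (GG A2 a b X) = (\<Sum>i<N. act a b (X [i, i])) + (\<Sum>i<N. (if i = a then X [b, i] else 0)) - (\<Sum>i<N. (if i = b then X [i, a] else 0))"
    unfolding ev_def by (simp add: sum.distrib sum_subtractf)
  then show ?thesis using ab by (simp add: ev_def act_sum)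
qed


lemma Yk_G:
  assumes ab: "a < N" "b < N"
  shows "(Y2 ^^ k) (GG A2 a b X) = GG A2 a b ((Y2 ^^ k) X)"
proof (induction k)
  case (Suc k)
  have h: "\<And>Z. Y2 (GG A2 a b Z) = GG A2 a b (Y2 Z)" by (rule hom_y) (use ab in simp_all)
  show ?case by (simp only: funpow.simps comp_apply Suc h)
qed simp

lemma Yk_add: "(Y2 ^^ k) (X + Z) = (Y2 ^^ k) X + (Y2 ^^ k) Z"
proof (induction k)
  case (Suc k)
  have h: "\<And>X Z. Y2 (X + Z) = Y2 X + Y2 Z" by (rule yop_add) simp
  show ?case by (simp only: funpow.simps comp_apply Suc h)
qed simp

lemma Yk_smul: "(Y2 ^^ k) (\<lambda>ps. smul c (X ps)) = (\<lambda>ps. smul c ((Y2 ^^ k) X ps))"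
proof (induction k)
  case (Suc k)
  have h: "\<And>X. Y2 (\<lambda>ps. smul c (X ps)) = (\<lambda>ps. smul c (Y2 X ps))" by (rule yop_smul) simp
  show ?case by (simp only: funpow.simps comp_apply Suc h)
qed simp

lemma oc_act: "a < N \<Longrightarrow> b < N \<Longrightarrow> act a b (omega_comp N smul act k m) = omega_comp N smul act k (act a b m)"
  unfolding oc_eq by (simp only: ev_G[symmetric] Yk_G[symmetric] G_x0)

lemma oc_add: "omega_comp N smul act k (m + m') = omega_comp N smul act k m + omega_comp N smul act k m'"
proof -
  have "x0 (m + m') = x0 m + x0 m'" by (simp add: x0_def fun_eq_iff)
  then show ?thesis unfolding oc_eq by (simp only: Yk_add ev_def plus_fun_apply sum.distrib)
qed

lemma oc_smul: "omega_comp N smul act k (smul c m) = smul c (omega_comp N smul act k m)"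
proof -
  have "x0 (smul c m) = (\<lambda>ps. smul c (x0 m ps))" by (simp add: x0_def fun_eq_iff)
  then show ?thesis unfolding oc_eq by (simp only: Yk_smul ev_def M.scale_sum_right)
qed

lemma oc_0: "omega_comp N smul act 0 m = smul (of_nat N) m"
  by (simp add: oc_eq ev_def x0_def valid2 M.sum_constant_scale)


lemma valid_cons2: "valid N (Suc (Suc n)) (q1 # q2 # rest) \<longleftrightarrow> q1 < N \<and> q2 < N \<and> valid N n rest"
  by (auto simp: valid_def)

lemma red:
  assumes A: "length A = Suc (Suc n)" "A ! 0 = 1" and r: "valid N n rest"
    and ZW: "\<And>q1 q2. Z (q1 # q2 # rest) = W [q1, q2]"
  shows "yop N smul act A 1 Z (q1 # q2 # rest) = Y2 W [q1, q2]"
proof -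
  have s1: "Suc 0 - 1 = (0::nat)" by simp
  show ?thesis using A r ZW
    by (simp add: yop_def Omega_def facact_def valid_cons2 valid2' valid_def[of N 0 "[]"] s1 cong: if_cong)
qed

lemma red_k:
  assumes A: "length A = Suc (Suc n)" "A ! 0 = 1" and r: "valid N n rest"
  shows "(yop N smul act A 1 ^^ k) (eop N (length A) 1 x) (q1 # q2 # rest) =
     (Y2 ^^ k) (x0 (\<Sum>p<N. x (p # p # rest))) [q1, q2]"
proof (induction k arbitrary: q1 q2)
  case 0
  show ?case using A r by (simp add: eop_E x0_def valid_cons2 valid2 valid2')
next
  case (Suc k)
  show ?case by (simp only: funpow.simps comp_apply) (rule red[OF A r], rule Suc.IH)
qed

lemma r4:
  assumes A: "2 \<le> length A" "A ! 0 = 1" and spec: "\<And>m. omega_comp N smul act k m = smul w m"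
  shows "eop N (length A) 1 ((yop N smul act A 1 ^^ k) (eop N (length A) 1 x)) = (\<lambda>ps. smul w (eop N (length A) 1 x ps))"
proof (rule ext)
  fix ps
  obtain n where n: "length A = Suc (Suc n)" using A by (metis add_2_eq_Suc le_Suc_ex)
  show "eop N (length A) 1 ((yop N smul act A 1 ^^ k) (eop N (length A) 1 x)) ps = smul w (eop N (length A) 1 x ps)"
  proof (cases "valid N (length A) ps")
    case False then show ?thesis by (simp add: eop_E)
  next
    case True
    then obtain q1 q2 rest where ps: "ps = q1 # q2 # rest" using n
      by (cases ps; cases "tl ps") (auto simp: valid_def)
    have v: "q1 < N" "q2 < N" "valid N n rest" using True ps n by (simp_all add: valid_cons2)
    have "eop N (length A) 1 ((yop N smul act A 1 ^^ k) (eop N (length A) 1 x)) ps =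
       (if q1 = q2 then (\<Sum>p<N. (Y2 ^^ k) (x0 (\<Sum>p<N. x (p # p # rest))) [p, p]) else 0)"
      using True ps red_k[OF n A(2) v(3)] by (simp add: eop_E)
    also have "\<dots> = (if q1 = q2 then omega_comp N smul act k (\<Sum>p<N. x (p # p # rest)) else 0)"
      by (simp add: oc_eq ev_def)
    also have "\<dots> = smul w (eop N (length A) 1 x ps)"
      using True ps by (simp add: spec eop_E)
    finally show ?thesis .
  qed
qed

end

context hwm begin

lemma oc_scalar: "\<exists>c. \<forall>m. omega_comp N smul act k m = smul c m"
proof -
  let ?z = "omega_comp N smul act k"
  have "\<exists>c. ?z v0 = smul c v0"
  proof (rule hw_weight)
    fix i assume "i < N"
    then show "act i i (?z v0) = smul (lam i) (?z v0)" by (simp add: oc_act hv oc_smul)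
  qed
  then obtain c where c: "?z v0 = smul c v0" by blast
  let ?K = "{m. ?z m = smul c m}"
  have "?K = UNIV"
  proof (rule hgen)
    show "M.subspace ?K" unfolding M.subspace_def
      by (auto simp: oc_add oc_smul M.scale_right_distrib mult_ac)
         (metis M.scale_zero_left M.scale_zero_right oc_smul)
    show "v0 \<in> ?K" using c by simp
    show "act i j x \<in> ?K" if "i < N" "j < N" "x \<in> ?K" for i j x
      using that by (simp add: oc_act[symmetric] act_smul)
  qed
  then show ?thesis by auto
qed

lemma omegaM_spec: "omega_comp N smul act k m = smul (omegaM N smul act k) m"
proof -
  have "\<forall>m. omega_comp N smul act k m = smul (omegaM N smul act k) m"
    unfolding omegaM_def by (rule someI_ex[OF oc_scalar])
  then show ?thesis by blast
qed

end


lemma length_seq_swap[simp]: "length (seq_swap A i) = length A"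
  by (simp add: seq_swap_def)

lemma word_target_Nil[simp]: "word_target A [] = A"
  by (simp add: word_target_def)
lemma word_target_Cons[simp]: "word_target A (g # w) = gen_target (word_target A w) g"
  by (simp add: word_target_def)

lemma length_gen_target[simp]: "length (gen_target B g) = length B"
  by (cases g) auto

lemma length_word_target[simp]: "length (word_target A w) = length A"
  by (induction w) auto

lemma set_seq_swap: "1 \<le> i \<Longrightarrow> i < length A \<Longrightarrow> set (seq_swap A i) \<subseteq> set A"
  unfolding seq_swap_def
  by (auto dest!: set_update_subset_insert[THEN subsetD] intro: nth_mem)

lemma set_word_target: "word_defined A w \<Longrightarrow> set (word_target A w) \<subseteq> set A"
proof (induction w)
  case (Cons g w)
  then have ih: "set (word_target A w) \<subseteq> set A" and d: "gen_defined (word_target A w) g" by auto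
  show ?case using ih d set_seq_swap[of _ "word_target A w"] by (cases g) auto
qed simp

lemma ty_eq: "set A \<subseteq> {1, -1} \<Longrightarrow> j < length A \<Longrightarrow> k < length A \<Longrightarrow> (A ! j = A ! k) \<longleftrightarrow> ((A ! j = 1) = (A ! k = 1))"
proof -
  assume a: "set A \<subseteq> {1, -1}" "j < length A" "k < length A"
  then have "A ! j \<in> {1, -1}" "A ! k \<in> {1, -1}" using nth_mem by blast+
  then show ?thesis by auto
qed

lemma seq_swap_eq: "1 \<le> i \<Longrightarrow> A ! (i - 1) = A ! i \<Longrightarrow> seq_swap A i = A"
  unfolding seq_swap_def by (metis list_update_id)

definition isSE :: "gen \<Rightarrow> bool" where
  "isSE g \<longleftrightarrow> (case g of Yg _ \<Rightarrow> False | _ \<Rightarrow> True)"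

context glm begin

fun kop :: "nat \<Rightarrow> gen \<Rightarrow> (nat list \<Rightarrow> 'm) \<Rightarrow> nat list \<Rightarrow> 'm" where
  "kop n (Sp i) = sop N n i"
| "kop n (Sh i) = sop N n i"
| "kop n (Ep i) = eop N n i"
| "kop n (Eh i) = eop N n i"
| "kop n (Yg i) = (\<lambda>x. x)"

fun kword :: "nat \<Rightarrow> gen list \<Rightarrow> (nat list \<Rightarrow> 'm) \<Rightarrow> nat list \<Rightarrow> 'm" where
  "kword n [] x = x"
| "kword n (g # w) x = kop n g (kword n w x)"

lemma word_op_kword: "\<forall>g\<in>set w. isSE g \<Longrightarrow> word_op N smul act A w x = kword (length A) w x"
proof (induction w)
  case (Cons g w)
  then show ?case by (cases g) (auto simp: isSE_def)
qed simp

lemma isSE_dS: "g \<in> dS i \<Longrightarrow> isSE g" by (auto simp: dS_def isSE_def)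
lemma isSE_dE: "g \<in> dE i \<Longrightarrow> isSE g" by (auto simp: dE_def isSE_def)
lemma kop_dS: "g \<in> dS i \<Longrightarrow> kop n g = sop N n i" by (auto simp: dS_def)
lemma kop_dE: "g \<in> dE i \<Longrightarrow> kop n g = eop N n i" by (auto simp: dE_def)
lemma def_dS: "g \<in> dS i \<Longrightarrow> gen_defined B g \<Longrightarrow> 1 \<le> i \<and> i < length B" by (auto simp: dS_def)
lemma def_dE: "g \<in> dE i \<Longrightarrow> gen_defined B g \<Longrightarrow> 1 \<le> i \<and> i < length B \<and> B ! (i - 1) \<noteq> B ! i" by (auto simp: dE_def)
lemma tgt_dS: "g \<in> dS i \<Longrightarrow> gen_defined B g \<Longrightarrow> gen_target B g = seq_swap B i"
  by (auto simp: dS_def seq_swap_eq)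
lemma len_tgt: "length (gen_target B g) = length B" by simp

lemma lc_one: "lc_op N smul act A [(1, w)] x = word_op N smul act A w x"
  by (simp add: lc_op_def fun_eq_iff)
lemma lc_c: "lc_op N smul act A [(c, w)] x = (\<lambda>ps. smul c (word_op N smul act A w x ps))"
  by (simp add: lc_op_def fun_eq_iff)
lemma lc_pm: "lc_op N smul act A [(1, w1), (-1, w2)] x = word_op N smul act A w1 x - word_op N smul act A w2 x"
  by (simp add: lc_op_def fun_eq_iff)
lemma lc_pp: "lc_op N smul act A [(1, w1), (1, w2)] x = word_op N smul act A w1 x + word_op N smul act A w2 x"
  by (simp add: lc_op_def fun_eq_iff)
lemma lc_nil: "lc_op N smul act A [] x = 0"
  by (simp add: lc_op_def fun_eq_iff)
lemma lc_m: "lc_op N smul act A [(-1, w)] x = - word_op N smul act A w x"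
  by (simp add: lc_op_def fun_eq_iff)

lemma lc_ok_one: "lc_ok A [(c, w)] T \<longleftrightarrow> word_defined A w \<and> word_target A w = T"
  by (simp add: lc_ok_def)
lemma lc_ok_two: "lc_ok A [(c, w1), (d, w2)] T \<longleftrightarrow> word_defined A w1 \<and> word_target A w1 = T \<and> word_defined A w2 \<and> word_target A w2 = T"
  by (auto simp: lc_ok_def)

end


context glm begin

lemma gop_dS: "g \<in> dS i \<Longrightarrow> gen_op N smul act B g = sop N (length B) i" by (auto simp: dS_def)
lemma gop_dE: "g \<in> dE i \<Longrightarrow> gen_op N smul act B g = eop N (length B) i" by (auto simp: dE_def)

lemmas kws = lc_one lc_c lc_pm lc_pp lc_nil word_op_kword isSE_dS isSE_dE kop_dS kop_dE

lemma okw: "lc_ok A ((c, w) # rest) T \<Longrightarrow> word_defined A w"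
  by (simp add: lc_ok_def)
lemma okw2: "lc_ok A ((c, w) # (d, w2) # rest) T \<Longrightarrow> word_defined A w2"
  by (simp add: lc_ok_def)

lemma getj: "1 \<le> i \<Longrightarrow> i < n \<Longrightarrow> \<exists>j. i = Suc j \<and> Suc j < n" by (cases i) auto

context fixes x :: "nat list \<Rightarrow> 'm" and A :: "int list" and T :: "int list" and L R :: lcomb
  assumes x: "x \<in> Tens N (length A)" and okL: "lc_ok A L T" and okR: "lc_ok A R T"
begin

lemma F1: assumes "(L, R) \<in> {(one [a, b], one []) | i a b. a \<in> dS i \<and> b \<in> dS i}"
  shows "lc_op N smul act A L x = lc_op N smul act A R x"
proof -
  obtain i a b where e: "L = one [a, b]" "R = one []" "a \<in> dS i" "b \<in> dS i" using assms by blast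
  have "gen_defined A b" using okw[OF okL[unfolded e]] by simp
  then obtain j where j: "i = Suc j" "Suc j < length A" using def_dS[OF e(4)] getj by blast
  show ?thesis using e j by (simp add: lc_one gop_dS[OF e(3)] gop_dS[OF e(4)] r1[OF j(2) x])
qed

lemma F2a: assumes "(L, R) \<in> {(one [a, b], one [c, d]) | i j a b c d. far i j \<and> a \<in> dS i \<and> b \<in> dS j \<and> c \<in> dS j \<and> d \<in> dS i}"
  shows "lc_op N smul act A L x = lc_op N smul act A R x"
proof -
  obtain i k a b c d where e: "L = one [a, b]" "R = one [c, d]" "far i k" "a \<in> dS i" "b \<in> dS k" "c \<in> dS k" "d \<in> dS i"
    using assms by blast
  have "gen_defined A b" "gen_defined A d" using okw[OF okL[unfolded e]] okw[OF okR[unfolded e]] by simp_all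
  then obtain p q where pq: "i = Suc p" "Suc p < length A" "k = Suc q" "Suc q < length A"
    using def_dS[OF e(5)] def_dS[OF e(7)] getj by metis
  show ?thesis
  proof (cases "i + 1 < k")
    case True
    then have "Suc p < q" using pq by simp
    have "sop N (length A) i (sop N (length A) k x) = sop N (length A) k (sop N (length A) i x)"
      unfolding pq by (rule far_ss) (use pq \<open>Suc p < q\<close> in simp_all)
    then show ?thesis using e by (simp add: lc_one gop_dS[OF e(4)] gop_dS[OF e(5)] gop_dS[OF e(6)] gop_dS[OF e(7)])
  next
    case False
    then have "Suc q < p" using e(3) pq by (simp add: far_def)
    have "sop N (length A) k (sop N (length A) i x) = sop N (length A) i (sop N (length A) k x)"
      unfolding pq by (rule far_ss) (use pq \<open>Suc q < p\<close> in simp_all)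
    then show ?thesis using e by (simp add: lc_one gop_dS[OF e(4)] gop_dS[OF e(5)] gop_dS[OF e(6)] gop_dS[OF e(7)])
  qed
qed

lemma F2b: assumes "(L, R) \<in> {(one [a, b, c], one [d, e, f]) | i a b c d e f.
        a \<in> dS i \<and> b \<in> dS (i + 1) \<and> c \<in> dS i \<and> d \<in> dS (i + 1) \<and> e \<in> dS i \<and> f \<in> dS (i + 1)}"
  shows "lc_op N smul act A L x = lc_op N smul act A R x"
proof -
  obtain i a b c d e f where e: "L = one [a, b, c]" "R = one [d, e, f]" "a \<in> dS i" "b \<in> dS (i + 1)" "c \<in> dS i"
    "d \<in> dS (i + 1)" "e \<in> dS i" "f \<in> dS (i + 1)"
    using assms by blast
  have dd: "gen_defined A c" "gen_defined (gen_target A c) b" using okw[OF okL[unfolded e]] by simp_all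
  have "1 \<le> i" "i + 1 < length A" using def_dS[OF e(5) dd(1)] def_dS[OF e(4) dd(2)] by auto
  then obtain j where j: "i = Suc j" "Suc (Suc j) < length A" by (cases i) auto
  show ?thesis using e j
    by (simp add: lc_one gop_dS[OF e(3)] gop_dS[OF e(4)] gop_dS[OF e(5)] gop_dS[OF e(6)] gop_dS[OF e(7)] gop_dS[OF e(8)] braid)
qed

lemma F3: assumes "(L, R) \<in> {(one [Ep i, Ep i], [(\<omega> 0, [Ep i])]) | i. True}"
    and om: "\<And>m. smul (\<omega> 0) m = smul (of_nat N) m"
  shows "lc_op N smul act A L x = lc_op N smul act A R x"
proof -
  obtain i where e: "L = one [Ep i, Ep i]" "R = [(\<omega> 0, [Ep i])]" using assms by blast
  have "gen_defined A (Ep i)" using okw[OF okL[unfolded e]] by simp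
  then obtain j where j: "i = Suc j" "Suc j < length A" using getj by auto
  show ?thesis using e j by (simp add: lc_one lc_c r3 om)
qed

lemma word_target_rep: "word_target A (replicate k (Yg i) @ w) = word_target A w"
  by (induction k) simp_all
lemma word_op_rep: "word_op N smul act A (replicate k (Yg i) @ w) x = (yop N smul act (word_target A w) i ^^ k) (word_op N smul act A w x)"
  by (induction k) (simp_all add: word_target_rep)

lemma F4: assumes "(L, R) \<in> {(one ([Ep 1] @ replicate k (Yg 1) @ [Ep 1]), [(\<omega> k, [Ep 1])]) | k.
        length A \<ge> 2 \<and> A ! 0 = 1 \<and> A ! 1 = -1}"
    and om: "\<And>k m. omega_comp N smul act k m = smul (\<omega> k) m"
  shows "lc_op N smul act A L x = lc_op N smul act A R x"
proof -
  obtain k where e: "L = one ([Ep 1] @ replicate k (Yg 1) @ [Ep 1])" "R = [(\<omega> k, [Ep 1])]"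
    "length A \<ge> 2" "A ! 0 = 1" using assms by blast
  have w: "word_op N smul act A ([Ep 1] @ replicate k (Yg 1) @ [Ep 1]) x =
     eop N (length A) 1 ((yop N smul act A 1 ^^ k) (eop N (length A) 1 x))"
    using word_op_rep[of k 1 "[Ep 1]"] word_target_rep[of k 1 "[Ep 1]"] by simp
  have r: "eop N (length A) (Suc 0) ((yop N smul act A (Suc 0) ^^ k) (eop N (length A) (Suc 0) x)) = (\<lambda>ps. smul (\<omega> k) (eop N (length A) (Suc 0) x ps))"
    using r4[OF e(3,4) om] by simp
  show ?thesis using e w r by (simp add: lc_one lc_c)
qed

end
end


context glm begin

lemma swp_nth_other: "l \<noteq> j \<Longrightarrow> l \<noteq> Suc j \<Longrightarrow> swp A j ! l = A ! l"
  by (simp add: swp_def nth_list_update)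

lemma tgt_dE: "b \<in> dE (Suc p) \<Longrightarrow> gen_target A b = A \<or> gen_target A b = swp A p"
  by (auto simp: dE_def seq_swap_swp)

lemma goodB:
  assumes p: "Suc p < length A" and tyA: "(A ! p = 1) \<noteq> (A ! Suc p = 1)" and B: "B = A \<or> B = swp A p"
  shows "(B ! p = 1) \<noteq> (B ! Suc p = 1)" "length B = length A"
    "\<And>l. l < length A \<Longrightarrow> l \<noteq> p \<Longrightarrow> l \<noteq> Suc p \<Longrightarrow> B ! l = A ! l"
  using B p tyA by (auto simp: swp_nth swp_nth_other)

lemma tyE: "set A \<subseteq> {1, -1} \<Longrightarrow> Suc p < length A \<Longrightarrow> A ! p \<noteq> A ! Suc p \<Longrightarrow> (A ! p = 1) \<noteq> (A ! Suc p = 1)"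
  using ty_eq[of A p "Suc p"] by auto

context fixes x :: "nat list \<Rightarrow> 'm" and A :: "int list" and T :: "int list" and L R :: lcomb
  assumes x: "x \<in> Tens N (length A)" and okL: "lc_ok A L T" and okR: "lc_ok A R T" and SA: "set A \<subseteq> {1, -1}"
begin

lemma F2c: assumes "(L, R) \<in> {(one [a, Yg j], one [Yg j, b]) | i j a b. j \<noteq> i \<and> j \<noteq> i + 1 \<and> a \<in> dS i \<and> b \<in> dS i}"
  shows "lc_op N smul act A L x = lc_op N smul act A R x"
proof -
  obtain i m a b where e: "L = one [a, Yg m]" "R = one [Yg m, b]" "m \<noteq> i" "m \<noteq> i + 1" "a \<in> dS i" "b \<in> dS i"
    using assms by blast
  have d1: "gen_defined A (Yg m)" using okw[OF okL[unfolded e]] by simp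
  have d2: "gen_defined A b" using okw[OF okR[unfolded e]] by simp
  obtain p where p: "i = Suc p" "Suc p < length A" using def_dS[OF e(6) d2] getj by blast
  have t: "gen_target A b = swp A p" using tgt_dS[OF e(6) d2] p by (simp add: seq_swap_swp)
  have m: "m \<le> length A" "m \<noteq> Suc p" "m \<noteq> Suc (Suc p)" using d1 e p by auto
  show ?thesis using e t y2s[OF p(2) m, of x]
    by (simp add: lc_one gop_dS[OF e(5)] gop_dS[OF e(6)] p)
qed

lemma F5a: assumes "(L, R) \<in> {(one [a, b], one [c, d]) | i j a b c d. far i j \<and> a \<in> dS i \<and> b \<in> dE j \<and> c \<in> dE j \<and> d \<in> dS i}"
  shows "lc_op N smul act A L x = lc_op N smul act A R x"
proof -
  obtain i k a b c d where e: "L = one [a, b]" "R = one [c, d]" "far i k" "a \<in> dS i" "b \<in> dE k" "c \<in> dE k" "d \<in> dS i"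
    using assms by blast
  have "gen_defined A b" "gen_defined A d" using okw[OF okL[unfolded e]] okw[OF okR[unfolded e]] by simp_all
  then obtain p q where pq: "i = Suc p" "Suc p < length A" "k = Suc q" "Suc q < length A"
    using def_dE[OF e(5)] def_dS[OF e(7)] getj by metis
  have "sop N (length A) i (eop N (length A) k x) = eop N (length A) k (sop N (length A) i x)"
  proof (cases "i + 1 < k")
    case True
    then show ?thesis unfolding pq by (intro far_se) (use pq in simp_all)
  next
    case False
    then have "Suc q < p" using e(3) pq by (simp add: far_def)
    then show ?thesis unfolding pq by (intro far_es[symmetric]) (use pq in simp_all)
  qed
  then show ?thesis using e by (simp add: lc_one gop_dS[OF e(4)] gop_dE[OF e(5)] gop_dE[OF e(6)] gop_dS[OF e(7)])
qed

lemma F5b: assumes "(L, R) \<in> {(one [a, b], one [c, d]) | i j a b c d. far i j \<and> a \<in> dE i \<and> b \<in> dE j \<and> c \<in> dE j \<and> d \<in> dE i}"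
  shows "lc_op N smul act A L x = lc_op N smul act A R x"
proof -
  obtain i k a b c d where e: "L = one [a, b]" "R = one [c, d]" "far i k" "a \<in> dE i" "b \<in> dE k" "c \<in> dE k" "d \<in> dE i"
    using assms by blast
  have "gen_defined A b" "gen_defined A d" using okw[OF okL[unfolded e]] okw[OF okR[unfolded e]] by simp_all
  then obtain p q where pq: "i = Suc p" "Suc p < length A" "k = Suc q" "Suc q < length A"
    using def_dE[OF e(5)] def_dE[OF e(7)] getj by metis
  have "eop N (length A) i (eop N (length A) k x) = eop N (length A) k (eop N (length A) i x)"
  proof (cases "i + 1 < k")
    case True
    then show ?thesis unfolding pq by (intro far_ee) (use pq in simp_all)
  next
    case False
    then have "Suc q < p" using e(3) pq by (simp add: far_def)
    then show ?thesis unfolding pq by (intro far_ee[symmetric]) (use pq in simp_all)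
  qed
  then show ?thesis using e by (simp add: lc_one gop_dE[OF e(4)] gop_dE[OF e(5)] gop_dE[OF e(6)] gop_dE[OF e(7)])
qed

lemma F5c: assumes "(L, R) \<in> {(one [a, Yg j], one [Yg j, b]) | i j a b. j \<noteq> i \<and> j \<noteq> i + 1 \<and> a \<in> dE i \<and> b \<in> dE i}"
  shows "lc_op N smul act A L x = lc_op N smul act A R x"
proof -
  obtain i m a b where e: "L = one [a, Yg m]" "R = one [Yg m, b]" "m \<noteq> i" "m \<noteq> i + 1" "a \<in> dE i" "b \<in> dE i"
    using assms by blast
  have d1: "gen_defined A (Yg m)" using okw[OF okL[unfolded e]] by simp
  have d2: "gen_defined A b" using okw[OF okR[unfolded e]] by simp
  obtain p where p: "i = Suc p" "Suc p < length A" using def_dE[OF e(6) d2] getj by blast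
  have tyA: "(A ! p = 1) \<noteq> (A ! Suc p = 1)" using def_dE[OF e(6) d2] p tyE[OF SA] by auto
  have B: "gen_target A b = A \<or> gen_target A b = swp A p" using tgt_dE e(6) p by simp
  note g = goodB[OF p(2) tyA B]
  have m: "m \<le> length A" "m \<noteq> Suc p" "m \<noteq> Suc (Suc p)" using d1 e p by auto
  have "eop N (length A) (Suc p) (yop N smul act A m x) = yop N smul act (gen_target A b) m (eop N (length A) (Suc p) x)"
    by (rule y5e[OF p(2) m tyA g])
  then show ?thesis using e
    by (simp add: lc_one gop_dE[OF e(5)] gop_dE[OF e(6)] p)
qed

lemma F5d: assumes "(L, R) \<in> {(one [Yg i, Yg j], one [Yg j, Yg i]) | i j. True}"
  shows "lc_op N smul act A L x = lc_op N smul act A R x"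
proof -
  obtain i m where e: "L = one [Yg i, Yg m]" "R = one [Yg m, Yg i]" using assms by blast
  have "gen_defined A (Yg m)" "gen_defined A (Yg i)" using okw[OF okL[unfolded e]] okw[OF okR[unfolded e]] by simp_all
  then show ?thesis using e yy[of i A m x] by (simp add: lc_one)
qed

end
end


context glm begin

context fixes x :: "nat list \<Rightarrow> 'm" and A :: "int list" and T :: "int list" and L R :: lcomb
  assumes x: "x \<in> Tens N (length A)" and okL: "lc_ok A L T" and okR: "lc_ok A R T" and SA: "set A \<subseteq> {1, -1}"
begin

lemma F6a: assumes "(L, R) \<in> {(one [Sh i, a], one [b]) | i a b. a \<in> dE i \<and> b \<in> dE i}"
  shows "lc_op N smul act A L x = lc_op N smul act A R x"
proof -
  obtain i a b where e: "L = one [Sh i, a]" "R = one [b]" "a \<in> dE i" "b \<in> dE i" using assms by blast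
  have "gen_defined A a" using okw[OF okL[unfolded e]] by simp
  then obtain p where p: "i = Suc p" "Suc p < length A" using def_dE[OF e(3)] getj by blast
  show ?thesis using e p r6a[OF p(2), of x] by (simp add: lc_one gop_dE[OF e(3)] gop_dE[OF e(4)])
qed

lemma F6b: assumes "(L, R) \<in> {(one [a, Sh i], one [b]) | i a b. a \<in> dE i \<and> b \<in> dE i}"
  shows "lc_op N smul act A L x = lc_op N smul act A R x"
proof -
  obtain i a b where e: "L = one [a, Sh i]" "R = one [b]" "a \<in> dE i" "b \<in> dE i" using assms by blast
  have "gen_defined A b" using okw[OF okR[unfolded e]] by simp
  then obtain p where p: "i = Suc p" "Suc p < length A" using def_dE[OF e(4)] getj by blast
  show ?thesis using e p r6b[OF p(2), of x] by (simp add: lc_one gop_dE[OF e(3)] gop_dE[OF e(4)])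
qed

lemma idx3: assumes "1 \<le> i" "i + 1 < length A" obtains p where "i = Suc p" "Suc (Suc p) < length A"
  using assms by (cases i) auto

lemma F6c: assumes "(L, R) \<in> {(one [a, b, c], one [d, e]) | i a b c d e.
        a \<in> dS i \<and> b \<in> dE (i + 1) \<and> c \<in> dE i \<and> d \<in> dS (i + 1) \<and> e \<in> dE i}"
  shows "lc_op N smul act A L x = lc_op N smul act A R x"
proof -
  obtain i a b c d e where e: "L = one [a, b, c]" "R = one [d, e]" "a \<in> dS i" "b \<in> dE (i + 1)" "c \<in> dE i"
    "d \<in> dS (i + 1)" "e \<in> dE i" using assms by blast
  have dd: "gen_defined A c" "gen_defined (gen_target A c) b" using okw[OF okL[unfolded e]] by simp_all
  have "1 \<le> i" "i + 1 < length A" using def_dE[OF e(5) dd(1)] def_dE[OF e(4) dd(2)] by auto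
  then obtain p where p: "i = Suc p" "Suc (Suc p) < length A" by (rule idx3)
  show ?thesis using e p r6c[OF p(2), of x]
    by (simp add: lc_one gop_dS[OF e(3)] gop_dE[OF e(4)] gop_dE[OF e(5)] gop_dS[OF e(6)] gop_dE[OF e(7)])
qed

lemma F6d: assumes "(L, R) \<in> {(one [a, b, c], one [d, e]) | i a b c d e.
        a \<in> dE i \<and> b \<in> dE (i + 1) \<and> c \<in> dS i \<and> d \<in> dE i \<and> e \<in> dS (i + 1)}"
  shows "lc_op N smul act A L x = lc_op N smul act A R x"
proof -
  obtain i a b c d e where e: "L = one [a, b, c]" "R = one [d, e]" "a \<in> dE i" "b \<in> dE (i + 1)" "c \<in> dS i"
    "d \<in> dE i" "e \<in> dS (i + 1)" using assms by blast
  have dd: "gen_defined A c" "gen_defined (gen_target A c) b" using okw[OF okL[unfolded e]] by simp_all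
  have "1 \<le> i" "i + 1 < length A" using def_dS[OF e(5) dd(1)] def_dE[OF e(4) dd(2)] by auto
  then obtain p where p: "i = Suc p" "Suc (Suc p) < length A" by (rule idx3)
  show ?thesis using e p r6d[OF p(2), of x]
    by (simp add: lc_one gop_dE[OF e(3)] gop_dE[OF e(4)] gop_dS[OF e(5)] gop_dE[OF e(6)] gop_dS[OF e(7)])
qed

lemma F6e: assumes "(L, R) \<in> {(one [a, b, c], one [d, e]) | i a b c d e.
        a \<in> dE (i + 1) \<and> b \<in> dE i \<and> c \<in> dS (i + 1) \<and> d \<in> dE (i + 1) \<and> e \<in> dS i}"
  shows "lc_op N smul act A L x = lc_op N smul act A R x"
proof -
  obtain i a b c d e where e: "L = one [a, b, c]" "R = one [d, e]" "a \<in> dE (i + 1)" "b \<in> dE i" "c \<in> dS (i + 1)"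
    "d \<in> dE (i + 1)" "e \<in> dS i" using assms by blast
  have dd: "gen_defined A c" "gen_defined (gen_target A c) b" using okw[OF okL[unfolded e]] by simp_all
  have "1 \<le> i" "i + 1 < length A" using def_dS[OF e(5) dd(1)] def_dE[OF e(4) dd(2)] by auto
  then obtain p where p: "i = Suc p" "Suc (Suc p) < length A" by (rule idx3)
  show ?thesis using e p r6e[OF p(2), of x]
    by (simp add: lc_one gop_dE[OF e(3)] gop_dE[OF e(4)] gop_dS[OF e(5)] gop_dE[OF e(6)] gop_dS[OF e(7)])
qed

lemma F6f: assumes "(L, R) \<in> {(one [a, b, c], one [d, e]) | i a b c d e.
        a \<in> dS (i + 1) \<and> b \<in> dE i \<and> c \<in> dE (i + 1) \<and> d \<in> dS i \<and> e \<in> dE (i + 1)}"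
  shows "lc_op N smul act A L x = lc_op N smul act A R x"
proof -
  obtain i a b c d e where e: "L = one [a, b, c]" "R = one [d, e]" "a \<in> dS (i + 1)" "b \<in> dE i" "c \<in> dE (i + 1)"
    "d \<in> dS i" "e \<in> dE (i + 1)" using assms by blast
  have dd: "gen_defined A c" "gen_defined (gen_target A c) b" using okw[OF okL[unfolded e]] by simp_all
  have "1 \<le> i" "i + 1 < length A" using def_dE[OF e(5) dd(1)] def_dE[OF e(4) dd(2)] by auto
  then obtain p where p: "i = Suc p" "Suc (Suc p) < length A" by (rule idx3)
  show ?thesis using e p r6f[OF p(2), of x]
    by (simp add: lc_one gop_dS[OF e(3)] gop_dE[OF e(4)] gop_dE[OF e(5)] gop_dS[OF e(6)] gop_dE[OF e(7)])
qed

lemma F6g: assumes "(L, R) \<in> {(one [a, b, c], one [d]) | i a b c d.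
        a \<in> dE (i + 1) \<and> b \<in> dE i \<and> c \<in> dE (i + 1) \<and> d \<in> dE (i + 1)}"
  shows "lc_op N smul act A L x = lc_op N smul act A R x"
proof -
  obtain i a b c d where e: "L = one [a, b, c]" "R = one [d]" "a \<in> dE (i + 1)" "b \<in> dE i" "c \<in> dE (i + 1)"
    "d \<in> dE (i + 1)" using assms by blast
  have dd: "gen_defined A c" "gen_defined (gen_target A c) b" using okw[OF okL[unfolded e]] by simp_all
  have "1 \<le> i" "i + 1 < length A" using def_dE[OF e(5) dd(1)] def_dE[OF e(4) dd(2)] by auto
  then obtain p where p: "i = Suc p" "Suc (Suc p) < length A" by (rule idx3)
  show ?thesis using e p r6g[OF p(2), of x]
    by (simp add: lc_one gop_dE[OF e(3)] gop_dE[OF e(4)] gop_dE[OF e(5)] gop_dE[OF e(6)])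
qed

lemma F6h: assumes "(L, R) \<in> {(one [a, b, c], one [d]) | i a b c d.
        a \<in> dE i \<and> b \<in> dE (i + 1) \<and> c \<in> dE i \<and> d \<in> dE i}"
  shows "lc_op N smul act A L x = lc_op N smul act A R x"
proof -
  obtain i a b c d where e: "L = one [a, b, c]" "R = one [d]" "a \<in> dE i" "b \<in> dE (i + 1)" "c \<in> dE i"
    "d \<in> dE i" using assms by blast
  have dd: "gen_defined A c" "gen_defined (gen_target A c) b" using okw[OF okL[unfolded e]] by simp_all
  have "1 \<le> i" "i + 1 < length A" using def_dE[OF e(5) dd(1)] def_dE[OF e(4) dd(2)] by auto
  then obtain p where p: "i = Suc p" "Suc (Suc p) < length A" by (rule idx3)
  show ?thesis using e p r6h[OF p(2), of x]
    by (simp add: lc_one gop_dE[OF e(3)] gop_dE[OF e(4)] gop_dE[OF e(5)] gop_dE[OF e(6)])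
qed

end
end


context glm begin

context fixes x :: "nat list \<Rightarrow> 'm" and A :: "int list" and T :: "int list" and L R :: lcomb
  assumes x: "x \<in> Tens N (length A)" and okL: "lc_ok A L T" and okR: "lc_ok A R T" and SA: "set A \<subseteq> {1, -1}"
begin

lemma F7a: assumes "(L, R) \<in> {([(1, [Sp i, Yg i]), (-1, [Yg (i + 1), Sp i])], [(-1, [])]) | i. True}"
  shows "lc_op N smul act A L x = lc_op N smul act A R x"
proof -
  obtain i where e: "L = [(1, [Sp i, Yg i]), (-1, [Yg (i + 1), Sp i])]" "R = [(-1, [])]" using assms by blast
  have d: "gen_defined A (Sp i)" using okw2[OF okL[unfolded e]] by simp
  then obtain p where p: "i = Suc p" "Suc p < length A" using getj by auto
  have eq: "A ! p = A ! Suc p" using d p by simp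
  have sA: "swp A p = A" using seq_swap_eq[of i A] d p by (simp add: seq_swap_swp)
  have o: "Om A (Suc p) (Suc (Suc p)) (sop N (length A) (Suc p) x) = x"
    using o1[OF p(2)] eq r1[OF p(2) x] by simp
  have "sop N (length A) (Suc p) (yop N smul act A (Suc p) x) = yop N smul act A (Suc (Suc p)) (sop N (length A) (Suc p) x) - x"
    using y7a[OF p(2), of x] sA o by simp
  then show ?thesis using e p by (simp add: lc_pm lc_m)
qed

lemma F7b: assumes "(L, R) \<in> {([(1, [Sp i, Yg (i + 1)]), (-1, [Yg i, Sp i])], [(1, [])]) | i. True}"
  shows "lc_op N smul act A L x = lc_op N smul act A R x"
proof -
  obtain i where e: "L = [(1, [Sp i, Yg (i + 1)]), (-1, [Yg i, Sp i])]" "R = [(1, [])]" using assms by blast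
  have d: "gen_defined A (Sp i)" using okw2[OF okL[unfolded e]] by simp
  then obtain p where p: "i = Suc p" "Suc p < length A" using getj by auto
  have eq: "A ! p = A ! Suc p" using d p by simp
  have sA: "swp A p = A" using seq_swap_eq[of i A] d p by (simp add: seq_swap_swp)
  have o: "Om A (Suc p) (Suc (Suc p)) (sop N (length A) (Suc p) x) = x"
    using o1[OF p(2)] eq r1[OF p(2) x] by simp
  have "sop N (length A) (Suc p) (yop N smul act A (Suc (Suc p)) x) = yop N smul act A (Suc p) (sop N (length A) (Suc p) x) + x"
    using y7b[OF p(2), of x] sA o by simp
  then show ?thesis using e p by (simp add: lc_pm lc_one)
qed

lemma F7c: assumes "(L, R) \<in> {([(1, [Sh i, Yg i]), (-1, [Yg (i + 1), Sh i])], [(1, [Eh i])]) | i. True}"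
  shows "lc_op N smul act A L x = lc_op N smul act A R x"
proof -
  obtain i where e: "L = [(1, [Sh i, Yg i]), (-1, [Yg (i + 1), Sh i])]" "R = [(1, [Eh i])]" using assms by blast
  have d: "gen_defined A (Sh i)" using okw2[OF okL[unfolded e]] by simp
  then obtain p where p: "i = Suc p" "Suc p < length A" using getj by auto
  have ty: "(A ! p = 1) \<noteq> (A ! Suc p = 1)" using d p tyE[OF SA] by simp
  have ty': "(swp A p ! p = 1) \<noteq> (swp A p ! Suc p = 1)" using ty p by (simp add: swp_nth)
  have o: "Om (swp A p) (Suc p) (Suc (Suc p)) (sop N (length A) (Suc p) x) = - eop N (length A) (Suc p) x"
    using o2[of p "swp A p"] ty' p r6b[OF p(2), of x] by simp
  have "sop N (length A) (Suc p) (yop N smul act A (Suc p) x) = yop N smul act (swp A p) (Suc (Suc p)) (sop N (length A) (Suc p) x) + eop N (length A) (Suc p) x"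
    using y7a[OF p(2), of x] o by simp
  then show ?thesis using e p by (simp add: lc_pm lc_one seq_swap_swp)
qed

lemma F7d: assumes "(L, R) \<in> {([(1, [Sh i, Yg (i + 1)]), (-1, [Yg i, Sh i])], [(-1, [Eh i])]) | i. True}"
  shows "lc_op N smul act A L x = lc_op N smul act A R x"
proof -
  obtain i where e: "L = [(1, [Sh i, Yg (i + 1)]), (-1, [Yg i, Sh i])]" "R = [(-1, [Eh i])]" using assms by blast
  have d: "gen_defined A (Sh i)" using okw2[OF okL[unfolded e]] by simp
  then obtain p where p: "i = Suc p" "Suc p < length A" using getj by auto
  have ty: "(A ! p = 1) \<noteq> (A ! Suc p = 1)" using d p tyE[OF SA] by simp
  have ty': "(swp A p ! p = 1) \<noteq> (swp A p ! Suc p = 1)" using ty p by (simp add: swp_nth)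
  have o: "Om (swp A p) (Suc p) (Suc (Suc p)) (sop N (length A) (Suc p) x) = - eop N (length A) (Suc p) x"
    using o2[of p "swp A p"] ty' p r6b[OF p(2), of x] by simp
  have "sop N (length A) (Suc p) (yop N smul act A (Suc (Suc p)) x) = yop N smul act (swp A p) (Suc p) (sop N (length A) (Suc p) x) - eop N (length A) (Suc p) x"
    using y7b[OF p(2), of x] o by simp
  then show ?thesis using e p by (simp add: lc_pm lc_m seq_swap_swp)
qed

lemma F8a: assumes "(L, R) \<in> {([(1, [a, Yg i]), (1, [a, Yg (i + 1)])], []) | i a. a \<in> dE i}"
  shows "lc_op N smul act A L x = lc_op N smul act A R x"
proof -
  obtain i a where e: "L = [(1, [a, Yg i]), (1, [a, Yg (i + 1)])]" "R = []" "a \<in> dE i" using assms by blast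
  have d: "gen_defined A a" using okw[OF okL[unfolded e]] by simp
  then obtain p where p: "i = Suc p" "Suc p < length A" using def_dE[OF e(3)] getj by blast
  have ty: "(A ! p = 1) \<noteq> (A ! Suc p = 1)" using def_dE[OF e(3) d] p tyE[OF SA] by simp
  have "eop N (length A) (Suc p) (yop N smul act A (Suc p) x) + eop N (length A) (Suc p) (yop N smul act A (Suc (Suc p)) x) = 0"
    using y8a[OF p(2) ty, of x] by (simp add: addop_def[THEN iffD1, OF eop_addop])
  then show ?thesis using e p by (simp add: lc_pp lc_nil gop_dE[OF e(3)])
qed

lemma F8b: assumes "(L, R) \<in> {([(1, [Yg i, a]), (1, [Yg (i + 1), a])], []) | i a. a \<in> dE i}"
  shows "lc_op N smul act A L x = lc_op N smul act A R x"
proof -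
  obtain i a where e: "L = [(1, [Yg i, a]), (1, [Yg (i + 1), a])]" "R = []" "a \<in> dE i" using assms by blast
  have d: "gen_defined A a" using okw[OF okL[unfolded e]] by simp
  then obtain p where p: "i = Suc p" "Suc p < length A" using def_dE[OF e(3)] getj by blast
  have tyA: "(A ! p = 1) \<noteq> (A ! Suc p = 1)" using def_dE[OF e(3) d] p tyE[OF SA] by simp
  have B: "gen_target A a = A \<or> gen_target A a = swp A p" using tgt_dE e(3) p by simp
  note g = goodB[OF p(2) tyA B]
  have "yop N smul act (gen_target A a) (Suc p) (eop N (length (gen_target A a)) (Suc p) x) +
        yop N smul act (gen_target A a) (Suc (Suc p)) (eop N (length (gen_target A a)) (Suc p) x) = 0"
    by (rule y8b) (use g p in simp_all)
  then show ?thesis using e p by (simp add: lc_pp lc_nil gop_dE[OF e(3)])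
qed

end
end


context glm begin

lemma fun_plus_eta: "(\<lambda>ps. x ps + y ps) = x + (y :: nat list \<Rightarrow> 'm)"
  by (simp add: fun_eq_iff)

lemma hom_gen:
  assumes SA: "set A \<subseteq> {1, -1}" and d: "gen_defined A g"
  shows "(\<forall>x \<in> Tens N (length A). gen_op N smul act A g x \<in> Tens N (length (gen_target A g))) \<and>
        (\<forall>x \<in> Tens N (length A). \<forall>y \<in> Tens N (length A).
            gen_op N smul act A g (\<lambda>ps. x ps + y ps) = (\<lambda>ps. gen_op N smul act A g x ps + gen_op N smul act A g y ps)) \<and>
        (\<forall>c. \<forall>x \<in> Tens N (length A).
            gen_op N smul act A g (\<lambda>ps. smul c (x ps)) = (\<lambda>ps. smul c (gen_op N smul act A g x ps))) \<and>
        (\<forall>a<N. \<forall>b<N. \<forall>x \<in> Tens N (length A).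
            gen_op N smul act A g (glact N act A a b x) = glact N act (gen_target A g) a b (gen_op N smul act A g x))"
proof (cases g)
  case (Sp i)
  then obtain p where p: "i = Suc p" "Suc p < length A" using d getj by auto
  have sA: "swp A p = A" using seq_swap_eq[of i A] d p Sp by (simp add: seq_swap_swp)
  show ?thesis using Sp p sA
    by (auto simp: Tens_sop smul_sop addop_def[THEN iffD1, OF sop_addop] fun_plus_eta glact_eq hom_s)
next
  case (Sh i)
  then obtain p where p: "i = Suc p" "Suc p < length A" using d getj by auto
  show ?thesis using Sh p
    by (auto simp: Tens_sop smul_sop addop_def[THEN iffD1, OF sop_addop] fun_plus_eta glact_eq hom_s seq_swap_swp)
next
  case (Ep i)
  then obtain p where p: "i = Suc p" "Suc p < length A" using d getj by auto
  have ty: "(A ! p = 1) \<noteq> (A ! Suc p = 1)" using d p Ep tyE[OF SA] by simp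
  have h: "eop N (length A) (Suc p) (GG A a b x) = GG A a b (eop N (length A) (Suc p) x)" if "a < N" "b < N" for a b x
    by (rule hom_e[OF p(2) that ty ty]) auto
  show ?thesis using Ep p h
    by (auto simp: Tens_eop smul_eop addop_def[THEN iffD1, OF eop_addop] fun_plus_eta glact_eq)
next
  case (Eh i)
  then obtain p where p: "i = Suc p" "Suc p < length A" using d getj by auto
  have ty: "(A ! p = 1) \<noteq> (A ! Suc p = 1)" using d p Eh tyE[OF SA] by simp
  note g = goodB[OF p(2) ty disjI2[OF refl]]
  have h: "eop N (length A) (Suc p) (GG A a b x) = GG (swp A p) a b (eop N (length A) (Suc p) x)" if "a < N" "b < N" for a b x
    by (rule hom_e[OF p(2) that ty g])
  show ?thesis using Eh p h
    by (auto simp: Tens_eop smul_eop addop_def[THEN iffD1, OF eop_addop] fun_plus_eta glact_eq seq_swap_swp)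
next
  case (Yg i)
  then have i: "i \<le> length A" using d by simp
  show ?thesis using Yg i
    by (auto simp: Tens_yop yop_smul yop_add fun_plus_eta glact_eq hom_y)
qed

end

lemma Seq_set: "A \<in> Seq r t \<Longrightarrow> set A \<subseteq> {1, -1}"
  by (simp add: Seq_def)

theorem mainTheorem14:
  fixes N r t :: nat
    and smul :: "complex \<Rightarrow> 'm::ab_group_add \<Rightarrow> 'm"
    and act :: "nat \<Rightarrow> nat \<Rightarrow> 'm \<Rightarrow> 'm"
  assumes "gl_module N smul act"
    and "highest_weight N smul act"
  shows "\<forall>A \<in> Seq r t.
     \<comment> \<open>the assigned operators respect all defining relations of VB_{r,t}(omega(M))\<close>
     (\<forall>(L, R) \<in> VB_rels (omegaM N smul act) A.
        (\<exists>T. lc_ok A L T \<and> lc_ok A R T) \<longrightarrow>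
        (\<forall>x \<in> Tens N (length A). lc_op N smul act A L x = lc_op N smul act A R x))
   \<and> \<comment> \<open>every generator acts by a gl_N-module homomorphism between the assigned modules\<close>
     (\<forall>g. gen_defined A g \<longrightarrow>
        (\<forall>x \<in> Tens N (length A). gen_op N smul act A g x \<in> Tens N (length (gen_target A g))) \<and>
        (\<forall>x \<in> Tens N (length A). \<forall>y \<in> Tens N (length A).
            gen_op N smul act A g (\<lambda>ps. x ps + y ps) = (\<lambda>ps. gen_op N smul act A g x ps + gen_op N smul act A g y ps)) \<and>
        (\<forall>c. \<forall>x \<in> Tens N (length A).
            gen_op N smul act A g (\<lambda>ps. smul c (x ps)) = (\<lambda>ps. smul c (gen_op N smul act A g x ps))) \<and>
        (\<forall>a<N. \<forall>b<N. \<forall>x \<in> Tens N (length A).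
            gen_op N smul act A g (glact N act A a b x) = glact N act (gen_target A g) a b (gen_op N smul act A g x)))"
proof -
  interpret glm N smul act by (rule glm.intro) (rule assms(1))
  obtain v0 lam where hw: "v0 \<noteq> 0" "\<forall>i<N. act i i v0 = smul (lam i) v0"
      "\<forall>i<N. \<forall>j<N. i < j \<longrightarrow> act i j v0 = 0"
      "\<forall>S. module.subspace smul S \<and> v0 \<in> S \<and> (\<forall>i<N. \<forall>j<N. \<forall>x\<in>S. act i j x \<in> S) \<longrightarrow> S = UNIV"
    using assms(2) unfolding highest_weight_def by blast
  interpret H: hwm N smul act v0 lam
  proof unfold_locales
    show "\<And>i. i < N \<Longrightarrow> act i i v0 = smul (lam i) v0" using hw(2) by blast
    show "\<And>i j. i < N \<Longrightarrow> j < N \<Longrightarrow> i < j \<Longrightarrow> act i j v0 = 0" using hw(3) by blast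
    show "\<And>S. M.subspace S \<Longrightarrow> v0 \<in> S \<Longrightarrow> (\<And>i j x. i < N \<Longrightarrow> j < N \<Longrightarrow> x \<in> S \<Longrightarrow> act i j x \<in> S) \<Longrightarrow> S = UNIV"
      using hw(4) by blast
  qed
  have om: "\<And>k m. omega_comp N smul act k m = smul (omegaM N smul act k) m"
    by (rule H.omegaM_spec)
  have om0: "\<And>m. smul (omegaM N smul act 0) m = smul (of_nat N) m"
    using om[of 0] oc_0 by metis
  show ?thesis
  proof (rule ballI, rule conjI)
    fix A assume A: "A \<in> Seq r t"
    have SA: "set A \<subseteq> {1, -1}" using Seq_set[OF A] .
    have key: "lc_op N smul act A L x = lc_op N smul act A R x"
      if mem: "(L, R) \<in> VB_rels (omegaM N smul act) A" and okL: "lc_ok A L T" and okR: "lc_ok A R T"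
        and x: "x \<in> Tens N (length A)" for L R T and x :: "nat list \<Rightarrow> 'm"
    proof -
      note fs = F1[OF x okL okR] F2a[OF x okL okR] F2b[OF x okL okR] F2c[OF x okL okR SA]
        F3[where \<omega>="omegaM N smul act", OF x okL okR _ om0] F4[where \<omega>="omegaM N smul act", OF x okL okR _ om]
        F5a[OF x okL okR SA] F5b[OF x okL okR SA] F5c[OF x okL okR SA] F5d[OF x okL okR SA]
        F6a[OF x okL okR SA] F6b[OF x okL okR SA] F6c[OF x okL okR SA] F6d[OF x okL okR SA]
        F6e[OF x okL okR SA] F6f[OF x okL okR SA] F6g[OF x okL okR SA] F6h[OF x okL okR SA]
        F7a[OF x okL okR SA] F7b[OF x okL okR SA] F7c[OF x okL okR SA] F7d[OF x okL okR SA]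
        F8a[OF x okL okR SA] F8b[OF x okL okR SA]
      show ?thesis
        using mem unfolding VB_rels_def
        apply (elim UnE)
                       apply (erule fs)
                       apply (erule fs)
                       apply (erule fs)
                       apply (erule fs)
                       apply (erule fs)
                       apply (erule fs)
                       apply (erule fs)
                       apply (erule fs)
                       apply (erule fs)
                       apply (erule fs)
                       apply (erule fs)
                       apply (erule fs)
                       apply (erule fs)
                       apply (erule fs)
                       apply (erule fs)
                       apply (erule fs)
                       apply (erule fs)
                       apply (erule fs)
                       apply (erule fs)
                       apply (erule fs)
                       apply (erule fs)
                       apply (erule fs)
                       apply (erule fs)
                       apply (erule fs)
        done
    qed
    then show "\<forall>(L, R) \<in> VB_rels (omegaM N smul act) A.
        (\<exists>T. lc_ok A L T \<and> lc_ok A R T) \<longrightarrow>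
        (\<forall>x \<in> Tens N (length A). lc_op N smul act A L x = lc_op N smul act A R x)" by blast
  next
    fix A assume A: "A \<in> Seq r t"
    show "\<forall>g. gen_defined A g \<longrightarrow>
        (\<forall>x \<in> Tens N (length A). gen_op N smul act A g x \<in> Tens N (length (gen_target A g))) \<and>
        (\<forall>x \<in> Tens N (length A). \<forall>y \<in> Tens N (length A).
            gen_op N smul act A g (\<lambda>ps. x ps + y ps) = (\<lambda>ps. gen_op N smul act A g x ps + gen_op N smul act A g y ps)) \<and>
        (\<forall>c. \<forall>x \<in> Tens N (length A).
            gen_op N smul act A g (\<lambda>ps. smul c (x ps)) = (\<lambda>ps. smul c (gen_op N smul act A g x ps))) \<and>
        (\<forall>a<N. \<forall>b<N. \<forall>x \<in> Tens N (length A).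
            gen_op N smul act A g (glact N act A a b x) = glact N act (gen_target A g) a b (gen_op N smul act A g x))"
      using hom_gen[OF Seq_set[OF A]] by blast
  qed
qed


end
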